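(* Let $\Omega\subset\mathbb{R}^2$ be a bounded domain with smooth boundary and $p\ge1$. There is $c=c(p,\Omega)>0$ such that for all $\varphi,\psi\in C^1(\overline\Omega)$ with $\varphi>0$, $\psi>0$ in $\overline\Omega$, $$\int_\Omega\varphi^{p+1}\psi\le c\left\{\int_\Omega\psi|\nabla\varphi|^2+\int_\Omega\frac{\varphi}{\psi}|\nabla\psi|^2+\int_\Omega\varphi\psi\right\}\cdot\int_\Omega\varphi^p+c\int_\Omega\psi|\nabla\varphi|^2.$$ *)

theory Defs
  imports "HOL-Analysis.Analysis"
begin

definition grad :: "(real^2 \<Rightarrow> real) \<Rightarrow> real^2 \<Rightarrow> real^2" where
  "grad f x = (\<chi> i. frechet_derivative f (at x) (axis i 1))"

definition smooth_real_fun :: "(real \<Rightarrow> real) \<Rightarrow> bool" where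
  "smooth_real_fun h \<longleftrightarrow> (\<forall>n t. ((deriv ^^ n) h) differentiable (at t))"

definition smooth_boundary :: "(real^2) set \<Rightarrow> bool" where
  "smooth_boundary \<Omega> \<longleftrightarrow>
    (\<forall>z\<in>frontier \<Omega>. \<exists>r>0. \<exists>(T :: real^2 \<Rightarrow> real^2) h. orthogonal_transformation T \<and> smooth_real_fun h \<and>
       \<Omega> \<inter> ball z r = {x \<in> ball z r. (T (x - z)) $ 2 < h ((T (x - z)) $ 1)})"

definition C1_closure :: "(real^2) set \<Rightarrow> (real^2 \<Rightarrow> real) \<Rightarrow> bool" where
  "C1_closure \<Omega> f \<longleftrightarrow> (\<forall>x\<in>\<Omega>. f differentiable (at x)) \<and> continuous_on (closure \<Omega>) f \<and>
     (\<exists>g. continuous_on (closure \<Omega>) g \<and> (\<forall>x\<in>\<Omega>. g x = grad f x))"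

end

theory Submission
  imports Defs
begin

definition pt :: "real \<Rightarrow> real \<Rightarrow> real^2" where
  "pt a b = (\<chi> i. if i = 1 then a else b)"

lemma pt_comp [simp]: "pt a b $ 1 = a" "pt a b $ 2 = b"
  by (simp_all add: pt_def)

lemma basis_prod_2:
  fixes f :: "real^2 \<Rightarrow> real"
  shows "(\<Prod>b\<in>(Basis::(real^2) set). f b) = f (axis 1 1) * f (axis 2 1)"
proof -
  have B: "(Basis::(real^2) set) = {axis 1 1, axis 2 1}"
  proof -
    have "(Basis::(real^2) set) = (\<lambda>i. axis i 1) ` UNIV" by (auto simp: Basis_vec_def)
    then show ?thesis by (simp add: UNIV_2)
  qed
  have "axis (1::2) (1::real) \<noteq> axis 2 1"
    by (simp add: axis_eq_axis)
  then show ?thesis unfolding B by simp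
qed

lemma pt_meas: "(\<lambda>(a,b). pt a b) \<in> (lborel \<Otimes>\<^sub>M lborel) \<rightarrow>\<^sub>M borel"
proof -
  have "continuous_on UNIV (\<lambda>(a,b). pt a b)"
    unfolding pt_def case_prod_beta
    apply (intro continuous_intros)
    subgoal for i by (cases "i = 1") (auto intro!: continuous_intros)
    done
  then show ?thesis
    by (simp add: borel_measurable_continuous_onI lborel_prod)
qed

lemma lborel_vec2:
  "(lborel :: (real^2) measure) = distr (lborel \<Otimes>\<^sub>M lborel) borel (\<lambda>(a,b). pt a b)"
proof (rule lborel_eqI)
  fix l u :: "real^2"
  assume le: "\<And>b. b \<in> Basis \<Longrightarrow> l \<bullet> b \<le> u \<bullet> b"
  have l1: "l$1 \<le> u$1" "l$2 \<le> u$2" using le[of "axis 1 1"] le[of "axis 2 1"]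
    by (auto simp: Basis_vec_def inner_axis)
  have pre: "(\<lambda>(a,b). pt a b) -` box l u \<inter> space (lborel \<Otimes>\<^sub>M lborel) = box (l$1) (u$1) \<times> box (l$2) (u$2)"
    by (auto simp: mem_box_cart forall_2 space_pair_measure)
  show "emeasure (distr (lborel \<Otimes>\<^sub>M lborel) borel (\<lambda>(a,b). pt a b)) (box l u) = (\<Prod>b\<in>Basis. (u - l) \<bullet> b)"
    using l1 by (simp add: emeasure_distr pt_meas pre lborel.emeasure_pair_measure_Times basis_prod_2 inner_axis ennreal_mult)
qed simp

lemma nn_integral_vec2:
  fixes K :: "real^2 \<Rightarrow> ennreal"
  assumes [measurable]: "K \<in> borel_measurable borel"
  shows "(\<integral>\<^sup>+x. K x \<partial>lborel) = (\<integral>\<^sup>+a. \<integral>\<^sup>+b. K (pt a b) \<partial>lborel \<partial>lborel)"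
proof -
  have "(\<integral>\<^sup>+x. K x \<partial>lborel) = (\<integral>\<^sup>+x. K x \<partial>(distr (lborel \<Otimes>\<^sub>M lborel) borel (\<lambda>(a,b). pt a b)))"
    by (subst lborel_vec2[symmetric]) simp
  also have "\<dots> = (\<integral>\<^sup>+y. K ((\<lambda>(a,b). pt a b) y) \<partial>(lborel \<Otimes>\<^sub>M lborel))"
    by (rule nn_integral_distr[OF pt_meas]) simp
  also have "\<dots> = (\<integral>\<^sup>+a. \<integral>\<^sup>+b. K (pt a b) \<partial>lborel \<partial>lborel)"
    by (subst lborel.nn_integral_fst[symmetric]) (auto intro!: measurable_compose[OF pt_meas])
  finally show ?thesis .
qed

lemma lborel_linear:
  fixes g :: "real^2 \<Rightarrow> real^2"
  assumes lg: "linear g" and dg: "det (matrix g) \<noteq> 0"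
  shows "lborel = density (distr lborel borel g) (\<lambda>_. ennreal \<bar>det (matrix g)\<bar>)"
proof (rule lborel_eqI)
  have ig: "inj g" using det_nz_iff_inj[OF lg] dg by simp
  obtain h where lh: "linear h" and hg: "\<And>x. h (g x) = x" and gh: "\<And>x. g (h x) = x"
    using linear_injective_isomorphism[OF lg ig] by auto
  have gm[measurable]: "g \<in> borel_measurable borel"
    using lg by (simp add: borel_measurable_continuous_onI linear_continuous_on linear_linear)
  have dd: "det (matrix g) * det (matrix h) = 1"
  proof -
    have "matrix (g \<circ> h) = matrix g ** matrix h" using matrix_compose[OF lh lg] .
    moreover have "g \<circ> h = id" using gh by auto
    ultimately show ?thesis by (metis det_mul det_I matrix_id_mat_1)
  qed
  fix l u :: "real^2"
  assume le: "\<And>b. b \<in> Basis \<Longrightarrow> l \<bullet> b \<le> u \<bullet> b"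
  have pre: "g -` box l u = h ` box l u"
    using gh hg by (auto simp: image_iff) (metis)
  have bor: "h ` box l u \<in> sets borel"
    using pre[symmetric] lg by (metis borel_open open_box open_vimage linear_continuous_on linear_linear)
  have lm: "h ` box l u \<in> lmeasurable"
    using measurable_linear_image[OF lh, of "box l u"] by simp
  have "emeasure lborel (h ` box l u) = emeasure lebesgue (h ` box l u)"
    using bor by simp
  also have "\<dots> = ennreal (measure lebesgue (h ` box l u))"
    using lm by (simp add: emeasure_eq_measure2)
  also have "\<dots> = ennreal (\<bar>det (matrix h)\<bar> * measure lebesgue (box l u))"
    using measure_linear_image[OF lh, of "box l u"] by simp
  finally have e1: "emeasure lborel (g -` box l u) = ennreal (\<bar>det (matrix h)\<bar> * measure lebesgue (box l u))"
    using pre by simp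
  have "emeasure (density (distr lborel borel g) (\<lambda>_. ennreal \<bar>det (matrix g)\<bar>)) (box l u)
        = ennreal \<bar>det (matrix g)\<bar> * emeasure (distr lborel borel g) (box l u)"
    by (simp add: emeasure_density nn_integral_cmult_indicator)
  also have "\<dots> = ennreal \<bar>det (matrix g)\<bar> * emeasure lborel (g -` box l u)"
    by (simp add: emeasure_distr)
  also have "\<dots> = ennreal (\<bar>det (matrix g)\<bar> * (\<bar>det (matrix h)\<bar> * measure lebesgue (box l u)))"
    using e1 by (simp add: ennreal_mult)
  also have "\<bar>det (matrix g)\<bar> * (\<bar>det (matrix h)\<bar> * measure lebesgue (box l u)) = measure lebesgue (box l u)"
    using dd by (simp add: abs_mult[symmetric])
  also have "measure lebesgue (box l u) = (\<Prod>b\<in>Basis. (u - l) \<bullet> b)"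
    using le by (simp add: measure_lborel_box_eq inner_diff_left)
  finally show "emeasure (density (distr lborel borel g) (\<lambda>_. ennreal \<bar>det (matrix g)\<bar>)) (box l u) = (\<Prod>b\<in>Basis. (u - l) \<bullet> b)" .
qed simp

lemma nn_integral_linear:
  fixes g :: "real^2 \<Rightarrow> real^2" and H :: "real^2 \<Rightarrow> ennreal"
  assumes lg: "linear g" and dg: "det (matrix g) \<noteq> 0" and [measurable]: "H \<in> borel_measurable borel"
  shows "(\<integral>\<^sup>+x. H x \<partial>lborel) = ennreal \<bar>det (matrix g)\<bar> * (\<integral>\<^sup>+x. H (g x) \<partial>lborel)"
proof -
  have gm[measurable]: "g \<in> borel_measurable borel"
    using lg by (simp add: borel_measurable_continuous_onI linear_continuous_on linear_linear)
  have "(\<integral>\<^sup>+x. H x \<partial>lborel) = (\<integral>\<^sup>+x. H x \<partial>(density (distr lborel borel g) (\<lambda>_. ennreal \<bar>det (matrix g)\<bar>)))"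
    using lborel_linear[OF lg dg] by simp
  also have "\<dots> = (\<integral>\<^sup>+x. ennreal \<bar>det (matrix g)\<bar> * H x \<partial>(distr lborel borel g))"
    by (simp add: nn_integral_density)
  also have "\<dots> = (\<integral>\<^sup>+x. ennreal \<bar>det (matrix g)\<bar> * H (g x) \<partial>lborel)"
    by (simp add: nn_integral_distr)
  also have "\<dots> = ennreal \<bar>det (matrix g)\<bar> * (\<integral>\<^sup>+x. H (g x) \<partial>lborel)"
    by (simp add: nn_integral_cmult)
  finally show ?thesis .
qed

lemma gagliardo_core:
  fixes V :: "real^2 \<Rightarrow> real" and F1 F2 :: "real^2 \<Rightarrow> ennreal" and d1 d2 :: "real^2"
  assumes lg: "linear g" and gdef: "\<And>x. g x = x$1 *\<^sub>R d1 + x$2 *\<^sub>R d2"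
    and [measurable]: "V \<in> borel_measurable borel" "F1 \<in> borel_measurable borel" "F2 \<in> borel_measurable borel"
    and dg: "det (matrix g) \<noteq> 0"
    and b1: "\<And>y. ennreal \<bar>V y\<bar> \<le> (\<integral>\<^sup>+ t. indicator {0..} t * F1 (y + t *\<^sub>R d1) \<partial>lborel)"
    and b2: "\<And>y. ennreal \<bar>V y\<bar> \<le> (\<integral>\<^sup>+ t. indicator {0..} t * F2 (y + t *\<^sub>R d2) \<partial>lborel)"
  shows "ennreal \<bar>det (matrix g)\<bar> * (\<integral>\<^sup>+ y. ennreal ((V y)\<^sup>2) \<partial>lborel) \<le> (\<integral>\<^sup>+y. F1 y \<partial>lborel) * (\<integral>\<^sup>+y. F2 y \<partial>lborel)"
proof -
  define D where "D = ennreal \<bar>det (matrix g)\<bar>"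
  have gm[measurable]: "g \<in> borel_measurable borel"
    using lg by (simp add: borel_measurable_continuous_onI linear_continuous_on linear_linear)
  have gpt: "g (pt a b) = a *\<^sub>R d1 + b *\<^sub>R d2" for a b by (simp add: gdef)
  define \<alpha> where "\<alpha> b = (\<integral>\<^sup>+ s. F1 (s *\<^sub>R d1 + b *\<^sub>R d2) \<partial>lborel)" for b
  define \<beta> where "\<beta> a = (\<integral>\<^sup>+ s. F2 (a *\<^sub>R d1 + s *\<^sub>R d2) \<partial>lborel)" for a
  have [measurable]: "(\<lambda>(s::real, b::real). F1 (s *\<^sub>R d1 + b *\<^sub>R d2)) \<in> borel_measurable (lborel \<Otimes>\<^sub>M lborel)"
    by measurable
  have [measurable]: "(\<lambda>(a::real, s::real). F2 (a *\<^sub>R d1 + s *\<^sub>R d2)) \<in> borel_measurable (lborel \<Otimes>\<^sub>M lborel)"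
    by measurable
  have am[measurable]: "\<alpha> \<in> borel_measurable lborel"
    unfolding \<alpha>_def by (rule lborel.borel_measurable_nn_integral) measurable
  have bm[measurable]: "\<beta> \<in> borel_measurable lborel"
    unfolding \<beta>_def by (rule lborel.borel_measurable_nn_integral) measurable
  have eV: "(\<integral>\<^sup>+ y. ennreal ((V y)\<^sup>2) \<partial>lborel) = D * (\<integral>\<^sup>+ x. ennreal ((V (g x))\<^sup>2) \<partial>lborel)"
    unfolding D_def by (rule nn_integral_linear[OF lg dg]) measurable
  have eF1: "(\<integral>\<^sup>+ y. F1 y \<partial>lborel) = D * (\<integral>\<^sup>+ x. F1 (g x) \<partial>lborel)"
    unfolding D_def by (rule nn_integral_linear[OF lg dg]) measurable
  have eF2: "(\<integral>\<^sup>+ y. F2 y \<partial>lborel) = D * (\<integral>\<^sup>+ x. F2 (g x) \<partial>lborel)"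
    unfolding D_def by (rule nn_integral_linear[OF lg dg]) measurable
  have A: "(\<integral>\<^sup>+ x. F1 (g x) \<partial>lborel) = (\<integral>\<^sup>+ b. \<alpha> b \<partial>lborel)"
  proof -
    have "(\<integral>\<^sup>+ x. F1 (g x) \<partial>lborel) = (\<integral>\<^sup>+a. \<integral>\<^sup>+b. F1 (g (pt a b)) \<partial>lborel \<partial>lborel)"
      by (rule nn_integral_vec2) measurable
    also have "\<dots> = (\<integral>\<^sup>+b. \<integral>\<^sup>+a. F1 (a *\<^sub>R d1 + b *\<^sub>R d2) \<partial>lborel \<partial>lborel)"
      unfolding gpt by (rule lborel_pair.Fubini'[symmetric]) measurable
    finally show ?thesis unfolding \<alpha>_def .
  qed
  have B: "(\<integral>\<^sup>+ x. F2 (g x) \<partial>lborel) = (\<integral>\<^sup>+ a. \<beta> a \<partial>lborel)"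
  proof -
    have "(\<integral>\<^sup>+ x. F2 (g x) \<partial>lborel) = (\<integral>\<^sup>+a. \<integral>\<^sup>+b. F2 (g (pt a b)) \<partial>lborel \<partial>lborel)"
      by (rule nn_integral_vec2) measurable
    then show ?thesis unfolding \<beta>_def gpt .
  qed
  have pa: "ennreal \<bar>V (a *\<^sub>R d1 + b *\<^sub>R d2)\<bar> \<le> \<alpha> b" for a b
  proof -
    have "ennreal \<bar>V (a *\<^sub>R d1 + b *\<^sub>R d2)\<bar> \<le> (\<integral>\<^sup>+ t. indicator {0..} t * F1 ((a *\<^sub>R d1 + b *\<^sub>R d2) + t *\<^sub>R d1) \<partial>lborel)"
      by (rule b1)
    also have "\<dots> \<le> (\<integral>\<^sup>+ t. F1 ((a + t) *\<^sub>R d1 + b *\<^sub>R d2) \<partial>lborel)"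
      by (intro nn_integral_mono) (auto simp: indicator_def algebra_simps)
    also have "\<dots> = \<alpha> b"
    proof -
      have m: "(\<lambda>s. F1 (s *\<^sub>R d1 + b *\<^sub>R d2)) \<in> borel_measurable borel" by measurable
      show ?thesis unfolding \<alpha>_def using nn_integral_real_affine[OF m, of 1 a] by simp
    qed
    finally show ?thesis .
  qed
  have pb: "ennreal \<bar>V (a *\<^sub>R d1 + b *\<^sub>R d2)\<bar> \<le> \<beta> a" for a b
  proof -
    have "ennreal \<bar>V (a *\<^sub>R d1 + b *\<^sub>R d2)\<bar> \<le> (\<integral>\<^sup>+ t. indicator {0..} t * F2 ((a *\<^sub>R d1 + b *\<^sub>R d2) + t *\<^sub>R d2) \<partial>lborel)"
      by (rule b2)
    also have "\<dots> \<le> (\<integral>\<^sup>+ t. F2 (a *\<^sub>R d1 + (b + t) *\<^sub>R d2) \<partial>lborel)"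
      by (intro nn_integral_mono) (auto simp: indicator_def algebra_simps)
    also have "\<dots> = \<beta> a"
    proof -
      have m: "(\<lambda>s. F2 (a *\<^sub>R d1 + s *\<^sub>R d2)) \<in> borel_measurable borel" by measurable
      show ?thesis unfolding \<beta>_def using nn_integral_real_affine[OF m, of 1 b] by simp
    qed
    finally show ?thesis .
  qed
  have X: "(\<integral>\<^sup>+ x. ennreal ((V (g x))\<^sup>2) \<partial>lborel) \<le> (\<integral>\<^sup>+ x. F1 (g x) \<partial>lborel) * (\<integral>\<^sup>+ x. F2 (g x) \<partial>lborel)"
  proof -
    have "(\<integral>\<^sup>+ x. ennreal ((V (g x))\<^sup>2) \<partial>lborel) = (\<integral>\<^sup>+a. \<integral>\<^sup>+b. ennreal ((V (g (pt a b)))\<^sup>2) \<partial>lborel \<partial>lborel)"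
      by (rule nn_integral_vec2) measurable
    also have "\<dots> \<le> (\<integral>\<^sup>+a. \<integral>\<^sup>+b. \<beta> a * \<alpha> b \<partial>lborel \<partial>lborel)"
    proof (intro nn_integral_mono)
      fix a b
      have "ennreal ((V (g (pt a b)))\<^sup>2) = ennreal \<bar>V (a *\<^sub>R d1 + b *\<^sub>R d2)\<bar> * ennreal \<bar>V (a *\<^sub>R d1 + b *\<^sub>R d2)\<bar>"
        by (simp add: gpt ennreal_mult[symmetric] power2_eq_square abs_mult[symmetric])
      also have "\<dots> \<le> \<beta> a * \<alpha> b"
        by (intro mult_mono pa pb) auto
      finally show "ennreal ((V (g (pt a b)))\<^sup>2) \<le> \<beta> a * \<alpha> b" .
    qed
    also have "\<dots> = (\<integral>\<^sup>+a. \<beta> a * (\<integral>\<^sup>+b. \<alpha> b \<partial>lborel) \<partial>lborel)"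
      by (subst nn_integral_cmult) auto
    also have "\<dots> = (\<integral>\<^sup>+a. \<beta> a \<partial>lborel) * (\<integral>\<^sup>+b. \<alpha> b \<partial>lborel)"
      by (subst nn_integral_multc) auto
    finally show ?thesis using A B by (simp add: mult.commute)
  qed
  have "D * (\<integral>\<^sup>+ y. ennreal ((V y)\<^sup>2) \<partial>lborel) = D * (D * (\<integral>\<^sup>+ x. ennreal ((V (g x))\<^sup>2) \<partial>lborel))"
    using eV by simp
  also have "\<dots> \<le> D * (D * ((\<integral>\<^sup>+ x. F1 (g x) \<partial>lborel) * (\<integral>\<^sup>+ x. F2 (g x) \<partial>lborel)))"
    by (intro mult_left_mono X) auto
  also have "\<dots> = (\<integral>\<^sup>+y. F1 y \<partial>lborel) * (\<integral>\<^sup>+y. F2 y \<partial>lborel)"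
    unfolding eF1 eF2 by (simp add: ac_simps)
  finally show ?thesis unfolding D_def .
qed

lemma ray_bound:
  fixes w :: "real^2 \<Rightarrow> real" and Gw :: "real^2 \<Rightarrow> real^2" and \<Omega> :: "(real^2) set"
  assumes oO: "open \<Omega>" and rho: "\<rho> > 0" and d0: "d \<noteq> 0"
    and seg: "\<And>t. t \<ge> 0 \<Longrightarrow> y + t *\<^sub>R d \<in> cball z \<rho> \<Longrightarrow> y + t *\<^sub>R d \<in> \<Omega>"
    and yb: "y \<in> ball z \<rho>"
    and der: "\<And>x. x \<in> \<Omega> \<Longrightarrow> (w has_derivative (\<lambda>h. Gw x \<bullet> h)) (at x)"
    and cG: "continuous_on \<Omega> Gw"
  shows "ennreal \<bar>(\<rho>\<^sup>2 - (norm (y - z))\<^sup>2)\<^sup>2 * w y\<bar> \<le>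
     (\<integral>\<^sup>+ t. indicator {0..} t * ennreal (indicator \<Omega> (y + t *\<^sub>R d) *
         ((\<rho>^4 * norm (Gw (y + t *\<^sub>R d)) + 4 * \<rho>^3 * \<bar>w (y + t *\<^sub>R d)\<bar>) * norm d)) \<partial>lborel)"
proof -
  define e where "e = y - z"
  define q where "q t = y + t *\<^sub>R d" for t :: real
  have qe: "q t - z = e + t *\<^sub>R d" for t by (simp add: q_def e_def)
  have cw: "continuous_on \<Omega> w"
    using der has_derivative_continuous continuous_at_imp_continuous_on by blast
  have cq: "continuous_on A q" for A unfolding q_def by (intro continuous_intros)
  define T where "T = (\<rho> + norm e) / norm d"
  have nd: "norm d > 0" using d0 by simp
  have T0: "T \<ge> 0" unfolding T_def using rho by simp
  have "norm (q T - z) \<ge> \<rho>"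
  proof -
    have "norm (T *\<^sub>R d) = \<rho> + norm e" unfolding T_def using nd rho by (simp add: field_simps)
    moreover have "norm (T *\<^sub>R d) \<le> norm (e + T *\<^sub>R d) + norm e"
      by (metis add_diff_cancel_left' norm_triangle_ineq4 add.commute)
    ultimately show ?thesis unfolding qe by simp
  qed
  moreover have "norm (q 0 - z) \<le> \<rho>" using yb by (simp add: q_def dist_norm norm_minus_commute)
  moreover have "continuous_on {0..T} (\<lambda>t. norm (q t - z))"
    by (intro continuous_intros cq)
  ultimately obtain t1 where t1: "0 \<le> t1" "t1 \<le> T" "norm (q t1 - z) = \<rho>"
    using IVT'[of "\<lambda>t. norm (q t - z)" 0 \<rho> T] T0 by auto
  have t1p: "t1 > 0"
  proof (rule ccontr)
    assume "\<not> t1 > 0" then have "t1 = 0" using t1 by simp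
    then show False using t1 yb by (simp add: q_def dist_norm norm_minus_commute)
  qed
  have inball: "norm (e + t *\<^sub>R d) \<le> \<rho>" if "0 \<le> t" "t \<le> t1" for t
  proof -
    define s where "s = t / t1"
    have s: "0 \<le> s" "s \<le> 1" using that t1p by (auto simp: s_def)
    have "e + t *\<^sub>R d = (1 - s) *\<^sub>R e + s *\<^sub>R (e + t1 *\<^sub>R d)"
      using t1p by (simp add: s_def algebra_simps)
    then have "norm (e + t *\<^sub>R d) \<le> (1 - s) * norm e + s * norm (e + t1 *\<^sub>R d)"
      using s by (metis abs_of_nonneg diff_ge_0_iff_ge norm_scaleR norm_triangle_ineq)
    also have "\<dots> \<le> (1 - s) * \<rho> + s * \<rho>"
      using s t1 yb qe[of t1] by (intro add_mono mult_left_mono) (auto simp: e_def dist_norm norm_minus_commute)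
    finally show ?thesis by (simp add: algebra_simps)
  qed
  have inO: "q t \<in> \<Omega>" if "0 \<le> t" "t \<le> t1" for t
  proof -
    have "z - (y + t *\<^sub>R d) = - (e + t *\<^sub>R d)" by (simp add: e_def algebra_simps)
    then have "norm (z - (y + t *\<^sub>R d)) \<le> \<rho>" using inball[OF that] by (metis norm_minus_cancel)
    then show ?thesis using seg[of t] that by (simp add: q_def dist_norm)
  qed
  define P where "P t = (\<rho>\<^sup>2 - (e \<bullet> e + 2 * t * (e \<bullet> d) + t\<^sup>2 * (d \<bullet> d)))\<^sup>2" for t
  define P' where "P' t = 2 * (\<rho>\<^sup>2 - (e \<bullet> e + 2 * t * (e \<bullet> d) + t\<^sup>2 * (d \<bullet> d))) * (- (2 * (e \<bullet> d) + 2 * t * (d \<bullet> d)))" for t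
  have un: "(norm (e + t *\<^sub>R d))\<^sup>2 = e \<bullet> e + 2 * t * (e \<bullet> d) + t\<^sup>2 * (d \<bullet> d)" for t
    unfolding power2_norm_eq_inner by (simp add: inner_add_left inner_add_right inner_commute power2_eq_square algebra_simps)
  have dP: "(P has_real_derivative P' t) (at t)" for t
    unfolding P_def P'_def by (auto intro!: derivative_eq_intros simp: power2_eq_square algebra_simps)
  have dW: "((\<lambda>t. w (q t)) has_real_derivative (Gw (q t) \<bullet> d)) (at t)" if "q t \<in> \<Omega>" for t
  proof -
    have "(q has_derivative (\<lambda>s. s *\<^sub>R d)) (at t)"
      unfolding q_def by (auto intro!: derivative_eq_intros)
    from has_derivative_compose[OF this der[OF that]]
    have "((\<lambda>t. w (q t)) has_derivative (\<lambda>s. Gw (q t) \<bullet> (s *\<^sub>R d))) (at t)" .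
    moreover have "(\<lambda>s. Gw (q t) \<bullet> (s *\<^sub>R d)) = (*) (Gw (q t) \<bullet> d)"
      by (auto simp: inner_scaleR_right)
    ultimately show ?thesis by (simp add: has_field_derivative_def)
  qed
  define f where "f t = P t * w (q t)" for t
  define f' where "f' t = P' t * w (q t) + P t * (Gw (q t) \<bullet> d)" for t
  have df: "(f has_vector_derivative f' x) (at x within {0..t1})" if "x \<in> {0..t1}" for x
  proof -
    have "(f has_real_derivative f' x) (at x)"
      unfolding f_def f'_def using dP dW[OF inO] that
      by (auto intro!: derivative_eq_intros simp: algebra_simps)
    then show ?thesis
      by (simp add: has_real_derivative_iff_has_vector_derivative has_vector_derivative_at_within)
  qed
  have ftc: "(f' has_integral (f t1 - f 0)) {0..t1}"
    using fundamental_theorem_of_calculus[OF t1(1) df] by simp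
  have ft1: "f t1 = 0"
  proof -
    have "P t1 = (\<rho>\<^sup>2 - (norm (e + t1 *\<^sub>R d))\<^sup>2)\<^sup>2" unfolding P_def un ..
    also have "\<dots> = 0" using t1(3) qe[of t1] by simp
    finally show ?thesis by (simp add: f_def)
  qed
  have f0: "f 0 = (\<rho>\<^sup>2 - (norm (y - z))\<^sup>2)\<^sup>2 * w y"
    by (simp add: f_def P_def q_def e_def power2_norm_eq_inner)
  define G where "G t = (\<rho>^4 * norm (Gw (q t)) + 4 * \<rho>^3 * \<bar>w (q t)\<bar>) * norm d" for t
  have cGq: "continuous_on {0..t1} (\<lambda>t. Gw (q t))"
    using continuous_on_compose2[OF cG cq, of "{0..t1}"] inO by (auto simp: image_subset_iff)
  have cwq: "continuous_on {0..t1} (\<lambda>t. w (q t))"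
    using continuous_on_compose2[OF cw cq, of "{0..t1}"] inO by (auto simp: image_subset_iff)
  have cGG: "continuous_on {0..t1} G"
    unfolding G_def by (intro continuous_intros cGq cwq)
  have Gi: "G integrable_on {0..t1}" using integrable_continuous_real[OF cGG] .
  have G0: "G t \<ge> 0" for t unfolding G_def using rho by (intro mult_nonneg_nonneg add_nonneg_nonneg) auto
  have fb: "norm (f' t) \<le> G t" if "t \<in> {0..t1}" for t
  proof -
    have tt: "0 \<le> t" "t \<le> t1" using that by auto
    define u where "u = e \<bullet> e + 2 * t * (e \<bullet> d) + t\<^sup>2 * (d \<bullet> d)"
    have u: "0 \<le> u" "u \<le> \<rho>\<^sup>2"
    proof -
      have "u = (norm (e + t *\<^sub>R d))\<^sup>2" unfolding u_def un ..
      then show "0 \<le> u" "u \<le> \<rho>\<^sup>2" using inball[OF tt] rho by (auto intro: power_mono)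
    qed
    have ed: "\<bar>(e + t *\<^sub>R d) \<bullet> d\<bar> \<le> \<rho> * norm d"
      using Cauchy_Schwarz_ineq2[of "e + t *\<^sub>R d" d] inball[OF tt]
      by (meson mult_right_mono norm_ge_zero order_trans)
    have ed2: "2 * (e \<bullet> d) + 2 * t * (d \<bullet> d) = 2 * ((e + t *\<^sub>R d) \<bullet> d)"
      by (simp add: inner_add_left algebra_simps)
    have "\<bar>P' t * w (q t)\<bar> \<le> 4 * \<rho>^3 * \<bar>w (q t)\<bar> * norm d"
    proof -
      have "\<bar>P' t\<bar> = 4 * (\<rho>\<^sup>2 - u) * \<bar>(e + t *\<^sub>R d) \<bullet> d\<bar>"
        unfolding P'_def u_def[symmetric] ed2 using u by (simp add: abs_mult)
      also have "\<dots> \<le> 4 * \<rho>\<^sup>2 * (\<rho> * norm d)"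
        using u ed rho by (intro mult_mono) auto
      finally have "\<bar>P' t\<bar> \<le> 4 * \<rho>^3 * norm d" by (simp add: power2_eq_square power3_eq_cube algebra_simps)
      then have "\<bar>P' t\<bar> * \<bar>w (q t)\<bar> \<le> (4 * \<rho>^3 * norm d) * \<bar>w (q t)\<bar>"
        by (rule mult_right_mono) simp
      then show ?thesis by (simp add: abs_mult algebra_simps)
    qed
    moreover have "\<bar>P t * (Gw (q t) \<bullet> d)\<bar> \<le> \<rho>^4 * norm (Gw (q t)) * norm d"
    proof -
      have "P t = (\<rho>\<^sup>2 - u)\<^sup>2" unfolding P_def u_def ..
      moreover have "(\<rho>\<^sup>2 - u)\<^sup>2 \<le> (\<rho>\<^sup>2)\<^sup>2" by (rule power_mono) (use u in auto)
      ultimately have "\<bar>P t\<bar> \<le> \<rho>^4" by (simp add: power_mult[symmetric])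
      moreover have "\<bar>Gw (q t) \<bullet> d\<bar> \<le> norm (Gw (q t)) * norm d" by (rule Cauchy_Schwarz_ineq2)
      ultimately show ?thesis by (simp add: abs_mult mult_mono mult.assoc)
    qed
    ultimately show ?thesis unfolding f'_def G_def real_norm_def
      by (smt (verit) abs_triangle_ineq distrib_right mult.commute mult.left_commute)
  qed
  have "\<bar>f 0\<bar> = norm (integral {0..t1} f')"
    using ftc ft1 by (simp add: integral_unique)
  also have "\<dots> \<le> integral {0..t1} G"
    using integral_norm_bound_integral[OF has_integral_integrable[OF ftc] Gi fb] .
  finally have I1: "ennreal \<bar>f 0\<bar> \<le> ennreal (integral {0..t1} G)" by simp
  also have "ennreal (integral {0..t1} G) = (\<integral>\<^sup>+ t. ennreal (indicator {0..t1} t * G t) \<partial>lborel)"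
    using nn_integral_has_integral_lebesgue[of "{0..t1}" G "integral {0..t1} G", OF G0 integrable_integral[OF Gi]]
    by simp
  also have "\<dots> \<le> (\<integral>\<^sup>+ t. indicator {0..} t * ennreal (indicator \<Omega> (y + t *\<^sub>R d) *
         ((\<rho>^4 * norm (Gw (y + t *\<^sub>R d)) + 4 * \<rho>^3 * \<bar>w (y + t *\<^sub>R d)\<bar>) * norm d)) \<partial>lborel)"
  proof (intro nn_integral_mono)
    fix t
    show "ennreal (indicator {0..t1} t * G t) \<le> indicator {0..} t * ennreal (indicator \<Omega> (y + t *\<^sub>R d) *
         ((\<rho>^4 * norm (Gw (y + t *\<^sub>R d)) + 4 * \<rho>^3 * \<bar>w (y + t *\<^sub>R d)\<bar>) * norm d))"
    proof (cases "t \<in> {0..t1}")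
      case True
      then have "y + t *\<^sub>R d \<in> \<Omega>" using inO by (auto simp: q_def)
      then show ?thesis using True by (simp add: G_def q_def)
    qed simp
  qed
  finally show ?thesis using f0 by simp
qed

lemma lipschitz_h:
  assumes sm: "smooth_real_fun h"
  obtains L where "L \<ge> 0" "\<And>a b. \<bar>a\<bar> \<le> r \<Longrightarrow> \<bar>b\<bar> \<le> r \<Longrightarrow> \<bar>h a - h b\<bar> \<le> L * \<bar>a - b\<bar>"
proof -
  have hd: "h differentiable (at t)" for t using sm[unfolded smooth_real_fun_def, rule_format, of 0 t] by simp
  have dd: "deriv h differentiable (at t)" for t using sm[unfolded smooth_real_fun_def, rule_format, of 1 t] by simp
  have dh: "(h has_real_derivative deriv h t) (at t)" for t
    using hd DERIV_deriv_iff_real_differentiable by blast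
  have cd: "continuous_on {-r..r} (deriv h)"
    using dd by (meson continuous_at_imp_continuous_on differentiable_imp_continuous_within)
  obtain B where B0: "\<forall>t\<in>{-r..r}. \<bar>deriv h t\<bar> \<le> B"
    using compact_imp_bounded[OF compact_continuous_image[OF cd compact_Icc]]
    unfolding bounded_iff by auto
  then have B: "\<And>t. t \<in> {-r..r} \<Longrightarrow> \<bar>deriv h t\<bar> \<le> B" by blast
  define L where "L = max B 0"
  have key: "\<bar>h b - h a\<bar> \<le> L * \<bar>b - a\<bar>" if "a < b" "\<bar>a\<bar> \<le> r" "\<bar>b\<bar> \<le> r" for a b
  proof -
    obtain \<xi> where \<xi>: "a < \<xi>" "\<xi> < b" "h b - h a = (b - a) * deriv h \<xi>"
      using MVT2[OF \<open>a < b\<close>, of h "deriv h"] dh by blast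
    have "-r \<le> \<xi> \<and> \<xi> \<le> r" using \<xi> that by linarith
    then have "\<bar>deriv h \<xi>\<bar> \<le> L" using B[of \<xi>] unfolding L_def by auto
    then show ?thesis using \<xi> that by (simp add: abs_mult mult_right_mono mult.commute)
  qed
  show ?thesis
  proof (rule that[of L])
    show "L \<ge> 0" by (simp add: L_def)
    fix a b assume ab: "\<bar>a\<bar> \<le> r" "\<bar>b\<bar> \<le> r"
    consider "a < b" | "a = b" | "b < a" by linarith
    then show "\<bar>h a - h b\<bar> \<le> L * \<bar>a - b\<bar>"
    proof cases
      case 1 then show ?thesis using key[of a b] ab by (simp add: abs_minus_commute)
    next
      case 3 then show ?thesis using key[of b a] ab by simp
    qed simp
  qed
qed

definition good_dirs :: "(real^2) set \<Rightarrow> real^2 \<Rightarrow> real \<Rightarrow> real^2 \<Rightarrow> real^2 \<Rightarrow> bool" where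
  "good_dirs \<Omega> z \<rho> d1 d2 \<longleftrightarrow> \<rho> > 0 \<and> d1 \<noteq> 0 \<and> d2 \<noteq> 0 \<and>
     det (matrix (\<lambda>x::real^2. x$1 *\<^sub>R d1 + x$2 *\<^sub>R d2)) \<noteq> 0 \<and>
     (\<forall>y\<in>\<Omega> \<inter> ball z \<rho>. \<forall>t\<ge>0. y + t *\<^sub>R d1 \<in> cball z \<rho> \<longrightarrow> y + t *\<^sub>R d1 \<in> \<Omega>) \<and>
     (\<forall>y\<in>\<Omega> \<inter> ball z \<rho>. \<forall>t\<ge>0. y + t *\<^sub>R d2 \<in> cball z \<rho> \<longrightarrow> y + t *\<^sub>R d2 \<in> \<Omega>)"

lemma lin_g: "linear (\<lambda>x::real^2. x$1 *\<^sub>R d1 + x$2 *\<^sub>R d2)"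
  by (intro linearI) (auto simp: algebra_simps)

lemma interior_good:
  assumes "cball z \<rho> \<subseteq> \<Omega>" "\<rho> > 0"
  shows "good_dirs \<Omega> z \<rho> (axis 1 1) (axis 2 1)"
proof -
  have "(\<lambda>x::real^2. x$1 *\<^sub>R axis 1 1 + x$2 *\<^sub>R axis 2 1) = id"
  proof
    fix x :: "real^2"
    show "x$1 *\<^sub>R axis 1 1 + x$2 *\<^sub>R axis 2 1 = id x"
      by (simp add: vec_eq_iff forall_2 axis_def)
  qed
  then show ?thesis using assms unfolding good_dirs_def
    by (auto simp: matrix_id_mat_1 axis_eq_0_iff)
qed

lemma boundary_good:
  fixes \<Omega> :: "(real^2) set" and T :: "real^2 \<Rightarrow> real^2"
  assumes T: "orthogonal_transformation T" and sm: "smooth_real_fun h" and r: "r > 0"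
    and eq: "\<Omega> \<inter> ball z r = {x \<in> ball z r. (T (x - z)) $ 2 < h ((T (x - z)) $ 1)}"
  obtains d1 d2 where "good_dirs \<Omega> z (r/2) d1 d2"
proof -
  obtain L where L: "L \<ge> 0" "\<And>a b. \<bar>a\<bar> \<le> r \<Longrightarrow> \<bar>b\<bar> \<le> r \<Longrightarrow> \<bar>h a - h b\<bar> \<le> L * \<bar>a - b\<bar>"
    using lipschitz_h[OF sm] by blast
  define S where "S = inv T"
  have S: "orthogonal_transformation S" using orthogonal_transformation_inv[OF T] by (simp add: S_def)
  have TS: "T (S x) = x" for x
    using orthogonal_transformation_surj[OF T] by (simp add: S_def surj_f_inv_f)
  have lT: "linear T" using T orthogonal_transformation_linear by blast
  have lS: "linear S" using S orthogonal_transformation_linear by blast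
  define e1 where "e1 = pt 1 (-(L+1))"
  define e2 where "e2 = pt (-1) (-(L+1))"
  define d1 where "d1 = S e1"
  define d2 where "d2 = S e2"
  have ray: "y + t *\<^sub>R S e \<in> \<Omega>"
    if e: "\<bar>e$1\<bar> = 1" "e$2 = -(L+1)" and y: "y \<in> \<Omega> \<inter> ball z r" and t: "t \<ge> 0"
      and yt: "y + t *\<^sub>R S e \<in> ball z r" for y t e
  proof -
    define y' where "y' = T (y - z)"
    have "y + t *\<^sub>R S e - z = (y - z) + t *\<^sub>R S e" by simp
    then have Tq: "T (y + t *\<^sub>R S e - z) = y' + t *\<^sub>R e"
      unfolding y'_def using TS by (simp only: linear_add[OF lT] linear_scale[OF lT])
    have yin: "y'$2 < h (y'$1)" using y eq unfolding y'_def by auto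
    have n1: "\<bar>y'$1\<bar> \<le> r"
    proof -
      have "norm (y - z) < r" using y by (simp add: dist_norm norm_minus_commute)
      moreover have "norm y' = norm (y - z)" unfolding y'_def by (rule orthogonal_transformation_norm[OF T])
      ultimately show ?thesis using component_le_norm_cart[of y' 1] by linarith
    qed
    have n2: "\<bar>(y' + t *\<^sub>R e)$1\<bar> \<le> r"
    proof -
      have "norm (y + t *\<^sub>R S e - z) < r" using yt by (simp add: dist_norm norm_minus_commute)
      moreover have "norm (y' + t *\<^sub>R e) = norm (y + t *\<^sub>R S e - z)" unfolding Tq[symmetric] by (rule orthogonal_transformation_norm[OF T])
      ultimately show ?thesis using component_le_norm_cart[of "y' + t *\<^sub>R e" 1] by linarith
    qed
    have "\<bar>h ((y' + t *\<^sub>R e)$1) - h (y'$1)\<bar> \<le> L * \<bar>(y' + t *\<^sub>R e)$1 - y'$1\<bar>"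
      using L(2)[OF n2 n1] .
    also have "\<bar>(y' + t *\<^sub>R e)$1 - y'$1\<bar> = t" using e t by (simp add: abs_mult)
    finally have "h ((y' + t *\<^sub>R e)$1) \<ge> h (y'$1) - L * t" by linarith
    moreover have "(y' + t *\<^sub>R e)$2 = y'$2 - (L+1) * t" unfolding vector_add_component vector_scaleR_component e(2) by (simp add: algebra_simps)
    moreover have "(L+1) * t = L * t + t" by (simp add: algebra_simps)
    ultimately have lt: "(y' + t *\<^sub>R e)$2 < h ((y' + t *\<^sub>R e)$1)" using yin t by linarith
    have "y + t *\<^sub>R S e \<in> {x \<in> ball z r. (T (x - z)) $ 2 < h ((T (x - z)) $ 1)}"
      using yt lt unfolding Tq[symmetric] by simp
    then have "y + t *\<^sub>R S e \<in> \<Omega> \<inter> ball z r" unfolding eq .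
    then show ?thesis by simp
  qed
  have "good_dirs \<Omega> z (r/2) d1 d2"
    unfolding good_dirs_def
  proof (intro conjI ballI allI impI)
    show "r/2 > 0" using r by simp
    show "d1 \<noteq> 0"
    proof
      assume "d1 = 0"
      then have "e1 = T 0" using TS[of e1] unfolding d1_def by simp
      then have "e1 = 0" using linear_0[OF lT] by simp
      then show False unfolding e1_def by (metis pt_comp(1) zero_index zero_neq_one)
    qed
    show "d2 \<noteq> 0"
    proof
      assume "d2 = 0"
      then have "e2 = T 0" using TS[of e2] unfolding d2_def by simp
      then have "e2 = 0" using linear_0[OF lT] by simp
      then have "e2$1 = 0" by simp
      then show False unfolding e2_def by simp
    qed
    let ?g = "\<lambda>x::real^2. x$1 *\<^sub>R d1 + x$2 *\<^sub>R d2"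
    have "inj ?g"
      unfolding linear_injective_0[OF lin_g]
    proof (intro allI impI)
      fix x :: "real^2" assume "?g x = 0"
      then have "T (?g x) = 0" using lT by (simp add: linear_0)
      moreover have "T (?g x) = x$1 *\<^sub>R e1 + x$2 *\<^sub>R e2"
        using TS unfolding d1_def d2_def linear_add[OF lT] linear_scale[OF lT] by simp
      ultimately have E: "x$1 *\<^sub>R e1 + x$2 *\<^sub>R e2 = 0" by simp
      have c1: "(x$1 *\<^sub>R e1 + x$2 *\<^sub>R e2)$1 = x$1 - x$2" by (simp add: e1_def e2_def)
      have c2: "(x$1 *\<^sub>R e1 + x$2 *\<^sub>R e2)$2 = -(L+1) * x$1 + -(L+1) * x$2" by (simp add: e1_def e2_def algebra_simps)
      have h1: "x$1 - x$2 = 0" using c1[unfolded E] by simp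
      have h2: "-(L+1) * x$1 + -(L+1) * x$2 = 0" using c2[unfolded E] by simp
      have "(L+1) * (x$1 + x$2) = 0" using h2 by algebra
      moreover have "L + 1 \<noteq> 0" using L(1) by simp
      ultimately have "x$1 + x$2 = 0" by simp
      then have "x$1 = 0" "x$2 = 0" using h1 by linarith+
      then show "x = 0" by (simp add: vec_eq_iff forall_2)
    qed
    then show "det (matrix ?g) \<noteq> 0" using det_nz_iff_inj[OF lin_g] by simp
  next
    fix y t assume y: "y \<in> \<Omega> \<inter> ball z (r/2)" and t: "0 \<le> t" and yt: "y + t *\<^sub>R d1 \<in> cball z (r/2)"
    have "y \<in> \<Omega> \<inter> ball z r" "y + t *\<^sub>R d1 \<in> ball z r" using y yt r by auto
    then show "y + t *\<^sub>R d1 \<in> \<Omega>" unfolding d1_def using ray[of e1 y t] t by (simp add: e1_def)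
  next
    fix y t assume y: "y \<in> \<Omega> \<inter> ball z (r/2)" and t: "0 \<le> t" and yt: "y + t *\<^sub>R d2 \<in> cball z (r/2)"
    have "y \<in> \<Omega> \<inter> ball z r" "y + t *\<^sub>R d2 \<in> ball z r" using y yt r by auto
    then show "y + t *\<^sub>R d2 \<in> \<Omega>" unfolding d2_def using ray[of e2 y t] t by (simp add: e2_def)
  qed
  then show ?thesis using that by blast
qed

lemma chart_estimate:
  fixes \<Omega> :: "(real^2) set" and w :: "real^2 \<Rightarrow> real" and Gw :: "real^2 \<Rightarrow> real^2"
  assumes oO: "open \<Omega>" and gd: "good_dirs \<Omega> z \<rho> d1 d2"
    and der: "\<And>x. x \<in> \<Omega> \<Longrightarrow> (w has_derivative (\<lambda>h. Gw x \<bullet> h)) (at x)"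
    and cG: "continuous_on \<Omega> Gw" and wpos: "\<And>x. x \<in> \<Omega> \<Longrightarrow> w x \<ge> 0"
  shows "(\<integral>\<^sup>+ x. ennreal ((indicator (\<Omega> \<inter> ball z \<rho>) x * ((\<rho>\<^sup>2 - (norm (x - z))\<^sup>2)\<^sup>2 * w x))\<^sup>2) \<partial>lborel)
     \<le> ennreal ((\<rho>^4 + 4 * \<rho>^3)\<^sup>2 * norm d1 * norm d2 / \<bar>det (matrix (\<lambda>x::real^2. x$1 *\<^sub>R d1 + x$2 *\<^sub>R d2))\<bar>)
        * (\<integral>\<^sup>+ x. ennreal (indicator \<Omega> x * (norm (Gw x) + w x)) \<partial>lborel)\<^sup>2"
proof -
  define g where "g = (\<lambda>x::real^2. x$1 *\<^sub>R d1 + x$2 *\<^sub>R d2)"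
  define D where "D = \<bar>det (matrix g)\<bar>"
  define M where "M = \<rho>^4 + 4 * \<rho>^3"
  define V where "V x = indicator (\<Omega> \<inter> ball z \<rho>) x * ((\<rho>\<^sup>2 - (norm (x - z))\<^sup>2)\<^sup>2 * w x)" for x
  define F where "F (d::real^2) x = ennreal (indicator \<Omega> x * ((\<rho>^4 * norm (Gw x) + 4 * \<rho>^3 * \<bar>w x\<bar>) * norm d))" for d x
  define I where "I = (\<integral>\<^sup>+ x. ennreal (indicator \<Omega> x * (norm (Gw x) + w x)) \<partial>lborel)"
  have rho: "\<rho> > 0" and d10: "d1 \<noteq> 0" and d20: "d2 \<noteq> 0" and dg: "det (matrix g) \<noteq> 0"
    and s1: "\<And>y t. y \<in> \<Omega> \<inter> ball z \<rho> \<Longrightarrow> t \<ge> 0 \<Longrightarrow> y + t *\<^sub>R d1 \<in> cball z \<rho> \<Longrightarrow> y + t *\<^sub>R d1 \<in> \<Omega>"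
    and s2: "\<And>y t. y \<in> \<Omega> \<inter> ball z \<rho> \<Longrightarrow> t \<ge> 0 \<Longrightarrow> y + t *\<^sub>R d2 \<in> cball z \<rho> \<Longrightarrow> y + t *\<^sub>R d2 \<in> \<Omega>"
    using gd unfolding good_dirs_def g_def by auto
  have Dp: "D > 0" using dg by (simp add: D_def)
  have cw: "continuous_on \<Omega> w"
    using der has_derivative_continuous continuous_at_imp_continuous_on by blast
  have bO: "\<Omega> \<in> sets borel" using oO by simp
  have bOB: "\<Omega> \<inter> ball z \<rho> \<in> sets borel" using oO by simp
  have Vm[measurable]: "V \<in> borel_measurable borel"
  proof -
    have "continuous_on (\<Omega> \<inter> ball z \<rho>) (\<lambda>x. (\<rho>\<^sup>2 - (norm (x - z))\<^sup>2)\<^sup>2 * w x)"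
      by (intro continuous_intros continuous_on_subset[OF cw]) auto
    from borel_measurable_continuous_on_indicator[OF bOB this]
    show ?thesis unfolding V_def by simp
  qed
  have Fm[measurable]: "F d \<in> borel_measurable borel" for d
  proof -
    have "continuous_on \<Omega> (\<lambda>x. (\<rho>^4 * norm (Gw x) + 4 * \<rho>^3 * \<bar>w x\<bar>) * norm d)"
      by (intro continuous_intros cw cG)
    from borel_measurable_continuous_on_indicator[OF bO this]
    show ?thesis unfolding F_def by simp
  qed
  have bnd: "ennreal \<bar>V y\<bar> \<le> (\<integral>\<^sup>+ t. indicator {0..} t * F d (y + t *\<^sub>R d) \<partial>lborel)"
    if d0: "d \<noteq> 0" and sd: "\<And>y t. y \<in> \<Omega> \<inter> ball z \<rho> \<Longrightarrow> t \<ge> 0 \<Longrightarrow> y + t *\<^sub>R d \<in> cball z \<rho> \<Longrightarrow> y + t *\<^sub>R d \<in> \<Omega>"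
    for y d
  proof (cases "y \<in> \<Omega> \<inter> ball z \<rho>")
    case True
    have "ennreal \<bar>(\<rho>\<^sup>2 - (norm (y - z))\<^sup>2)\<^sup>2 * w y\<bar> \<le> (\<integral>\<^sup>+ t. indicator {0..} t * ennreal (indicator \<Omega> (y + t *\<^sub>R d) *
         ((\<rho>^4 * norm (Gw (y + t *\<^sub>R d)) + 4 * \<rho>^3 * \<bar>w (y + t *\<^sub>R d)\<bar>) * norm d)) \<partial>lborel)"
      by (rule ray_bound[OF oO rho d0 _ _ der cG]) (use True sd in auto)
    then show ?thesis using True by (simp add: V_def F_def)
  next
    case False
    then show ?thesis by (simp add: V_def)
  qed
  have core: "ennreal D * (\<integral>\<^sup>+ y. ennreal ((V y)\<^sup>2) \<partial>lborel) \<le> (\<integral>\<^sup>+y. F d1 y \<partial>lborel) * (\<integral>\<^sup>+y. F d2 y \<partial>lborel)"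
  proof -
    have lg: "linear g" unfolding g_def by (rule lin_g)
    have gd': "\<And>x. g x = x$1 *\<^sub>R d1 + x$2 *\<^sub>R d2" by (simp add: g_def)
    show ?thesis unfolding D_def
      by (rule gagliardo_core[OF lg gd' Vm Fm Fm dg bnd[OF d10 s1] bnd[OF d20 s2]])
  qed
  have Fb: "(\<integral>\<^sup>+y. F d y \<partial>lborel) \<le> ennreal (M * norm d) * I" for d
  proof -
    have "(\<integral>\<^sup>+y. F d y \<partial>lborel) \<le> (\<integral>\<^sup>+y. ennreal (M * norm d) * ennreal (indicator \<Omega> y * (norm (Gw y) + w y)) \<partial>lborel)"
    proof (intro nn_integral_mono)
      fix y
      show "F d y \<le> ennreal (M * norm d) * ennreal (indicator \<Omega> y * (norm (Gw y) + w y))"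
      proof (cases "y \<in> \<Omega>")
        case True
        have wy: "w y \<ge> 0" using wpos[OF True] .
        have a: "0 \<le> \<rho>^4 * w y" "0 \<le> 4*\<rho>^3 * norm (Gw y)" using wy rho by simp_all
        have "M * (norm (Gw y) + w y) = \<rho>^4 * norm (Gw y) + 4*\<rho>^3 * w y + (\<rho>^4 * w y + 4*\<rho>^3*norm(Gw y))"
          unfolding M_def by (simp add: algebra_simps)
        then have i1: "(\<rho>^4 * norm (Gw y) + 4 * \<rho>^3 * \<bar>w y\<bar>) \<le> M * (norm (Gw y) + w y)"
          using a abs_of_nonneg[OF wy] by linarith
        have "(\<rho>^4 * norm (Gw y) + 4 * \<rho>^3 * \<bar>w y\<bar>) * norm d \<le> (M * (norm (Gw y) + w y)) * norm d"
          by (rule mult_right_mono[OF i1]) simp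
        also have "\<dots> = M * norm d * (norm (Gw y) + w y)" by (simp add: ac_simps)
        finally have i2: "(\<rho>^4 * norm (Gw y) + 4 * \<rho>^3 * \<bar>w y\<bar>) * norm d \<le> M * norm d * (norm (Gw y) + w y)" .
        have Mp: "M \<ge> 0" using rho unfolding M_def by simp
        have "ennreal (M * norm d) * ennreal (indicator \<Omega> y * (norm (Gw y) + w y)) = ennreal (M * norm d * (norm (Gw y) + w y))"
          using True wy Mp by (subst ennreal_mult[symmetric]) (auto simp: mult.assoc)
        then show ?thesis using i2 True by (simp add: F_def ennreal_leI)
      qed (simp add: F_def)
    qed
    also have "\<dots> = ennreal (M * norm d) * I"
    proof -
      have "continuous_on \<Omega> (\<lambda>x. norm (Gw x) + w x)" by (intro continuous_intros cw cG)
      from borel_measurable_continuous_on_indicator[OF bO this]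
      have "(\<lambda>x. ennreal (indicator \<Omega> x * (norm (Gw x) + w x))) \<in> borel_measurable borel" by simp
      then show ?thesis unfolding I_def by (intro nn_integral_cmult) simp
    qed
    finally show ?thesis .
  qed
  have "ennreal D * (\<integral>\<^sup>+ y. ennreal ((V y)\<^sup>2) \<partial>lborel) \<le> (ennreal (M * norm d1) * I) * (ennreal (M * norm d2) * I)"
    using core Fb[of d1] Fb[of d2] by (meson dual_order.trans mult_mono zero_le)
  also have "\<dots> = ennreal (M\<^sup>2 * norm d1 * norm d2) * I\<^sup>2"
    using rho unfolding M_def by (simp add: ennreal_mult[symmetric] power2_eq_square ac_simps)
  finally have A: "ennreal D * (\<integral>\<^sup>+ y. ennreal ((V y)\<^sup>2) \<partial>lborel) \<le> ennreal (M\<^sup>2 * norm d1 * norm d2) * I\<^sup>2" .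
  have "(\<integral>\<^sup>+ y. ennreal ((V y)\<^sup>2) \<partial>lborel) = ennreal (1/D) * (ennreal D * (\<integral>\<^sup>+ y. ennreal ((V y)\<^sup>2) \<partial>lborel))"
    using Dp by (simp add: mult.assoc[symmetric] ennreal_mult[symmetric])
  also have "\<dots> \<le> ennreal (1/D) * (ennreal (M\<^sup>2 * norm d1 * norm d2) * I\<^sup>2)"
    by (rule mult_left_mono[OF A]) simp
  also have "\<dots> = ennreal (M\<^sup>2 * norm d1 * norm d2 / D) * I\<^sup>2"
    using Dp by (simp add: mult.assoc[symmetric] ennreal_mult[symmetric])
  finally show ?thesis unfolding V_def I_def M_def D_def g_def .
qed

lemma cover:
  fixes \<Omega> :: "(real^2) set"
  assumes bO: "bounded \<Omega>" and oO: "open \<Omega>" and sb: "smooth_boundary \<Omega>"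
  obtains C :: "((real^2) \<times> real \<times> (real^2) \<times> (real^2)) set" where "finite C"
    "\<And>c. c \<in> C \<Longrightarrow> good_dirs \<Omega> (fst c) (fst (snd c)) (fst (snd (snd c))) (snd (snd (snd c)))"
    "closure \<Omega> \<subseteq> (\<Union>c\<in>C. ball (fst c) (fst (snd c)))"
proof -
  have ex: "\<exists>p. good_dirs \<Omega> x (fst p) (fst (snd p)) (snd (snd p))" if xc: "x \<in> closure \<Omega>" for x
  proof (cases "x \<in> \<Omega>")
    case True
    obtain e where e: "e > 0" "ball x e \<subseteq> \<Omega>" using oO True open_contains_ball by blast
    have "cball x (e/2) \<subseteq> ball x e" using e by (simp add: cball_subset_ball_iff)
    then have "cball x (e/2) \<subseteq> \<Omega>" using e by blast
    then have "good_dirs \<Omega> x (e/2) (axis 1 1) (axis 2 1)" using e by (intro interior_good) auto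
    then show ?thesis by (intro exI[of _ "(e/2, axis 1 1, axis 2 1)"]) simp
  next
    case False
    then have "x \<in> frontier \<Omega>" using xc oO by (simp add: frontier_def interior_open)
    then obtain r and T :: "real^2 \<Rightarrow> real^2" and h where r: "r > 0" "orthogonal_transformation T" "smooth_real_fun h"
      "\<Omega> \<inter> ball x r = {y \<in> ball x r. (T (y - x)) $ 2 < h ((T (y - x)) $ 1)}"
      using sb unfolding smooth_boundary_def by blast
    obtain d1 d2 where "good_dirs \<Omega> x (r/2) d1 d2" using boundary_good[OF r(2) r(3) r(1) r(4)] by blast
    then show ?thesis by (intro exI[of _ "(r/2, d1, d2)"]) simp
  qed
  define sel where "sel x = (SOME p. good_dirs \<Omega> x (fst p) (fst (snd p)) (snd (snd p)))" for x
  have sel: "good_dirs \<Omega> x (fst (sel x)) (fst (snd (sel x))) (snd (snd (sel x)))" if "x \<in> closure \<Omega>" for x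
    unfolding sel_def using someI_ex[OF ex[OF that]] .
  have cpt: "compact (closure \<Omega>)" using bO by (simp add: compact_closure)
  have "closure \<Omega> \<subseteq> (\<Union>x\<in>closure \<Omega>. ball x (fst (sel x)))"
  proof
    fix x assume "x \<in> closure \<Omega>"
    then have "fst (sel x) > 0" using sel[of x] unfolding good_dirs_def by auto
    then show "x \<in> (\<Union>x\<in>closure \<Omega>. ball x (fst (sel x)))"
      by (intro UN_I[OF \<open>x \<in> closure \<Omega>\<close>]) simp
  qed
  then obtain D where D: "D \<subseteq> closure \<Omega>" "finite D" "closure \<Omega> \<subseteq> (\<Union>x\<in>D. ball x (fst (sel x)))"
    using compactE_image[OF cpt, of "closure \<Omega>" "\<lambda>x. ball x (fst (sel x))"] by auto
  show ?thesis
  proof (rule that[of "(\<lambda>x. (x, sel x)) ` D"])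
    show "finite ((\<lambda>x. (x, sel x)) ` D)" using D by simp
    show "good_dirs \<Omega> (fst c) (fst (snd c)) (fst (snd (snd c))) (snd (snd (snd c)))" if "c \<in> (\<lambda>x. (x, sel x)) ` D" for c
      using that D sel by auto
    show "closure \<Omega> \<subseteq> (\<Union>c\<in>(\<lambda>x. (x, sel x)) ` D. ball (fst c) (fst (snd c)))"
      using D by auto
  qed
qed

lemma V_meas:
  fixes \<Omega> :: "(real^2) set" and w :: "real^2 \<Rightarrow> real"
  assumes "open \<Omega>" "continuous_on \<Omega> w"
  shows "(\<lambda>x. indicator (\<Omega> \<inter> ball z \<rho>) x * ((\<rho>\<^sup>2 - (norm (x - z))\<^sup>2)\<^sup>2 * w x)) \<in> borel_measurable borel"
proof -
  have bOB: "\<Omega> \<inter> ball z \<rho> \<in> sets borel" using assms by simp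
  have "continuous_on (\<Omega> \<inter> ball z \<rho>) (\<lambda>x. (\<rho>\<^sup>2 - (norm (x - z))\<^sup>2)\<^sup>2 * w x)"
    by (intro continuous_intros continuous_on_subset[OF assms(2)]) auto
  from borel_measurable_continuous_on_indicator[OF bOB this]
  show ?thesis by simp
qed

lemma sobolev:
  fixes \<Omega> :: "(real^2) set"
  assumes bO: "bounded \<Omega>" and oO: "open \<Omega>" and sb: "smooth_boundary \<Omega>" and ne: "\<Omega> \<noteq> {}"
  obtains K :: real where "K > 0" and
    "\<And>w Gw. (\<And>x. x \<in> \<Omega> \<Longrightarrow> (w has_derivative (\<lambda>h. Gw x \<bullet> h)) (at x)) \<Longrightarrow> continuous_on \<Omega> Gw \<Longrightarrow>
      (\<And>x. x \<in> \<Omega> \<Longrightarrow> w x \<ge> 0) \<Longrightarrow>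
      (\<integral>\<^sup>+ x. ennreal (indicator \<Omega> x * (w x)\<^sup>2) \<partial>lborel)
        \<le> ennreal K * (\<integral>\<^sup>+ x. ennreal (indicator \<Omega> x * (norm (Gw x) + w x)) \<partial>lborel)\<^sup>2"
proof -
  obtain C where C: "finite C"
    "\<And>c. c \<in> C \<Longrightarrow> good_dirs \<Omega> (fst c) (fst (snd c)) (fst (snd (snd c))) (snd (snd (snd c)))"
    "closure \<Omega> \<subseteq> (\<Union>c\<in>C. ball (fst c) (fst (snd c)))"
    using cover[OF bO oO sb] by blast
  define cz where "cz c = fst c" for c :: "(real^2) \<times> real \<times> (real^2) \<times> (real^2)"
  define cr where "cr c = fst (snd c)" for c :: "(real^2) \<times> real \<times> (real^2) \<times> (real^2)"
  define ca where "ca c = fst (snd (snd c))" for c :: "(real^2) \<times> real \<times> (real^2) \<times> (real^2)"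
  define cb where "cb c = snd (snd (snd c))" for c :: "(real^2) \<times> real \<times> (real^2) \<times> (real^2)"
  have gd: "good_dirs \<Omega> (cz c) (cr c) (ca c) (cb c)" if "c \<in> C" for c
    using C(2)[OF that] by (simp add: cz_def cr_def ca_def cb_def)
  have crp: "cr c > 0" if "c \<in> C" for c using gd[OF that] unfolding good_dirs_def by auto
  define chi where "chi c x = (max 0 ((cr c)\<^sup>2 - (norm (x - cz c))\<^sup>2))\<^sup>2" for c x
  define S where "S x = (\<Sum>c\<in>C. chi c x)" for x
  have cS: "continuous_on (closure \<Omega>) S" unfolding S_def chi_def by (intro continuous_intros)
  have cpt: "compact (closure \<Omega>)" using bO by (simp add: compact_closure)
  have cne: "closure \<Omega> \<noteq> {}" using ne by simp
  obtain x0 where x0: "x0 \<in> closure \<Omega>" "\<And>y. y \<in> closure \<Omega> \<Longrightarrow> S x0 \<le> S y"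
    using continuous_attains_inf[OF cpt cne cS] by blast
  define \<delta> where "\<delta> = S x0"
  have chi0: "chi c x \<ge> 0" for c x unfolding chi_def by simp
  have \<delta>p: "\<delta> > 0"
  proof -
    obtain c where c: "c \<in> C" "x0 \<in> ball (cz c) (cr c)" using C(3) x0(1) by (auto simp: cz_def cr_def)
    have "norm (x0 - cz c) < cr c" using c by (simp add: dist_norm norm_minus_commute)
    then have "(norm (x0 - cz c))\<^sup>2 < (cr c)\<^sup>2" by (simp add: power_strict_mono)
    then have "chi c x0 > 0" unfolding chi_def by simp
    then show ?thesis unfolding \<delta>_def S_def using sum_pos2[OF C(1) c(1), of "\<lambda>c. chi c x0"] chi0 by simp
  qed
  define N where "N = real (card C)"
  define g where "g c = (\<lambda>x::real^2. x$1 *\<^sub>R ca c + x$2 *\<^sub>R cb c)" for c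
  define KC where "KC c = ((cr c)^4 + 4 * (cr c)^3)\<^sup>2 * norm (ca c) * norm (cb c) / \<bar>det (matrix (g c))\<bar>" for c
  have KC0: "KC c \<ge> 0" if "c \<in> C" for c using crp[OF that] unfolding KC_def by simp
  define K where "K = N / \<delta>\<^sup>2 * (\<Sum>c\<in>C. KC c) + 1"
  have K0: "N / \<delta>\<^sup>2 * (\<Sum>c\<in>C. KC c) \<ge> 0" using KC0 by (simp add: N_def sum_nonneg)
  show ?thesis
  proof (rule that[of K])
    show "K > 0" using K0 by (simp add: K_def)
    fix w :: "real^2 \<Rightarrow> real" and Gw :: "real^2 \<Rightarrow> real^2"
    assume der: "\<And>x. x \<in> \<Omega> \<Longrightarrow> (w has_derivative (\<lambda>h. Gw x \<bullet> h)) (at x)"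
      and cG: "continuous_on \<Omega> Gw" and wpos: "\<And>x. x \<in> \<Omega> \<Longrightarrow> w x \<ge> 0"
    have cw: "continuous_on \<Omega> w"
      using der has_derivative_continuous continuous_at_imp_continuous_on by blast
    define I where "I = (\<integral>\<^sup>+ x. ennreal (indicator \<Omega> x * (norm (Gw x) + w x)) \<partial>lborel)"
    define V where "V c x = indicator (\<Omega> \<inter> ball (cz c) (cr c)) x * (((cr c)\<^sup>2 - (norm (x - cz c))\<^sup>2)\<^sup>2 * w x)" for c x
    have Vm: "(\<lambda>x. ennreal ((V c x)\<^sup>2)) \<in> borel_measurable lborel" for c
    proof -
      have "V c \<in> borel_measurable borel" unfolding V_def[abs_def] by (rule V_meas[OF oO cw])
      then show ?thesis by simp
    qed
    have Vest: "(\<integral>\<^sup>+ x. ennreal ((V c x)\<^sup>2) \<partial>lborel) \<le> ennreal (KC c) * I\<^sup>2" if "c \<in> C" for c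
      unfolding V_def KC_def I_def g_def by (rule chart_estimate[OF oO gd[OF that] der cG wpos])
    have Vchi: "V c x = chi c x * w x" if "x \<in> \<Omega>" "c \<in> C" for c x
    proof (cases "x \<in> ball (cz c) (cr c)")
      case True
      then have "norm (x - cz c) < cr c" by (simp add: dist_norm norm_minus_commute)
      then have "(norm (x - cz c))\<^sup>2 \<le> (cr c)\<^sup>2"
        using power_mono[of "norm (x - cz c)" "cr c" 2] by simp
      then show ?thesis using True that by (simp add: V_def chi_def)
    next
      case False
      then have "cr c \<le> norm (x - cz c)" by (simp add: dist_norm norm_minus_commute)
      moreover have "cr c \<ge> 0" using crp[OF that(2)] by simp
      ultimately have "(cr c)\<^sup>2 \<le> (norm (x - cz c))\<^sup>2" by (simp add: power_mono)
      then show ?thesis using False by (simp add: V_def chi_def)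
    qed
    have pw: "indicator \<Omega> x * (w x)\<^sup>2 \<le> N / \<delta>\<^sup>2 * (\<Sum>c\<in>C. (V c x)\<^sup>2)" for x
    proof (cases "x \<in> \<Omega>")
      case True
      have wx: "w x \<ge> 0" using wpos[OF True] .
      have "\<delta> \<le> S x" unfolding \<delta>_def using x0(2)[of x] True closure_subset by auto
      then have "\<delta> * w x \<le> S x * w x" using wx by (simp add: mult_right_mono)
      also have "\<dots> = (\<Sum>c\<in>C. V c x)" unfolding S_def sum_distrib_right using Vchi[OF True] by (intro sum.cong) auto
      finally have a: "\<delta> * w x \<le> (\<Sum>c\<in>C. V c x)" .
      have "(\<delta> * w x)\<^sup>2 \<le> (\<Sum>c\<in>C. V c x)\<^sup>2" using a \<delta>p wx by (intro power_mono) auto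
      also have "\<dots> = (\<Sum>c\<in>C. V c x * 1)\<^sup>2" by simp
      also have "\<dots> \<le> (\<Sum>c\<in>C. (V c x)\<^sup>2) * (\<Sum>c\<in>C. 1\<^sup>2)" by (rule Cauchy_Schwarz_ineq_sum)
      also have "\<dots> = N * (\<Sum>c\<in>C. (V c x)\<^sup>2)" by (simp add: N_def)
      finally have "\<delta>\<^sup>2 * (w x)\<^sup>2 \<le> N * (\<Sum>c\<in>C. (V c x)\<^sup>2)" by (simp add: power_mult_distrib)
      then have "(w x)\<^sup>2 \<le> N * (\<Sum>c\<in>C. (V c x)\<^sup>2) / \<delta>\<^sup>2" using \<delta>p by (simp add: field_simps)
      then show ?thesis using True by simp
    next
      case False
      then show ?thesis by (simp add: N_def sum_nonneg)
    qed
    have "(\<integral>\<^sup>+ x. ennreal (indicator \<Omega> x * (w x)\<^sup>2) \<partial>lborel)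
        \<le> (\<integral>\<^sup>+ x. ennreal (N / \<delta>\<^sup>2) * (\<Sum>c\<in>C. ennreal ((V c x)\<^sup>2)) \<partial>lborel)"
    proof (intro nn_integral_mono)
      fix x
      have "ennreal (indicator \<Omega> x * (w x)\<^sup>2) \<le> ennreal (N / \<delta>\<^sup>2 * (\<Sum>c\<in>C. (V c x)\<^sup>2))"
        using pw by (rule ennreal_leI)
      also have "\<dots> = ennreal (N / \<delta>\<^sup>2) * ennreal (\<Sum>c\<in>C. (V c x)\<^sup>2)"
        by (rule ennreal_mult) (auto simp: N_def intro: sum_nonneg)
      also have "\<dots> = ennreal (N / \<delta>\<^sup>2) * (\<Sum>c\<in>C. ennreal ((V c x)\<^sup>2))"
        by simp
      finally show "ennreal (indicator \<Omega> x * (w x)\<^sup>2) \<le> ennreal (N / \<delta>\<^sup>2) * (\<Sum>c\<in>C. ennreal ((V c x)\<^sup>2))" .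
    qed
    also have "\<dots> = ennreal (N / \<delta>\<^sup>2) * (\<integral>\<^sup>+ x. (\<Sum>c\<in>C. ennreal ((V c x)\<^sup>2)) \<partial>lborel)"
      by (rule nn_integral_cmult) (rule borel_measurable_sum, rule Vm)
    also have "\<dots> = ennreal (N / \<delta>\<^sup>2) * (\<Sum>c\<in>C. (\<integral>\<^sup>+ x. ennreal ((V c x)\<^sup>2) \<partial>lborel))"
      by (rule arg_cong[where f="\<lambda>u. ennreal (N / \<delta>\<^sup>2) * u"]) (rule nn_integral_sum, rule Vm)
    also have "\<dots> \<le> ennreal (N / \<delta>\<^sup>2) * (\<Sum>c\<in>C. ennreal (KC c) * I\<^sup>2)"
      by (intro mult_left_mono sum_mono Vest) auto
    also have "\<dots> = ennreal (N / \<delta>\<^sup>2) * (ennreal (\<Sum>c\<in>C. KC c) * I\<^sup>2)"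
      using KC0 by (simp add: sum_distrib_right[symmetric])
    also have "\<dots> = ennreal (N / \<delta>\<^sup>2 * (\<Sum>c\<in>C. KC c)) * I\<^sup>2"
      using KC0 by (subst ennreal_mult) (auto simp: N_def intro: sum_nonneg simp: mult.assoc)
    also have "\<dots> \<le> ennreal K * I\<^sup>2"
      unfolding K_def by (intro mult_right_mono ennreal_leI) auto
    finally show "(\<integral>\<^sup>+ x. ennreal (indicator \<Omega> x * (w x)\<^sup>2) \<partial>lborel) \<le> ennreal K * I\<^sup>2" .
  qed
qed

lemma grad_has_derivative:
  fixes f :: "real^2 \<Rightarrow> real"
  assumes "f differentiable (at x)"
  shows "(f has_derivative (\<lambda>h. grad f x \<bullet> h)) (at x)"
proof -
  let ?D = "frechet_derivative f (at x)"
  have d: "(f has_derivative ?D) (at x)" using assms frechet_derivative_works by blast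
  have l: "linear ?D" using has_derivative_linear[OF d] .
  have "?D h = grad f x \<bullet> h" for h
  proof -
    have "h = h$1 *\<^sub>R axis 1 1 + h$2 *\<^sub>R axis 2 1" by (simp add: vec_eq_iff forall_2 axis_def)
    then have "?D h = ?D (h$1 *\<^sub>R axis 1 1 + h$2 *\<^sub>R axis 2 1)" by simp
    also have "\<dots> = h$1 * ?D (axis 1 1) + h$2 * ?D (axis 2 1)"
      using l by (simp add: linear_add linear_scale)
    also have "\<dots> = grad f x \<bullet> h" by (simp add: grad_def inner_vec_def sum_2 mult.commute)
    finally show ?thesis .
  qed
  then have "?D = (\<lambda>h. grad f x \<bullet> h)" by (rule ext)
  then show ?thesis using d by simp
qed

lemma nn_eq_integral:
  fixes f :: "real^2 \<Rightarrow> real" and \<Omega> :: "(real^2) set"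
  assumes bO: "bounded \<Omega>" and oO: "open \<Omega>" and cf: "continuous_on (closure \<Omega>) f"
    and nn: "\<And>x. x \<in> \<Omega> \<Longrightarrow> f x \<ge> 0"
  shows "f integrable_on \<Omega>" "(\<integral>\<^sup>+ x. ennreal (indicator \<Omega> x * f x) \<partial>lborel) = ennreal (integral \<Omega> f)"
proof -
  have cpt: "compact (closure \<Omega>)" using bO by (simp add: compact_closure)
  have i1: "integrable lborel (\<lambda>x. indicator (closure \<Omega>) x *\<^sub>R f x)" by (rule borel_integrable_compact[OF cpt cf])
  have i2: "integrable lborel (\<lambda>x. indicator \<Omega> x *\<^sub>R (indicator (closure \<Omega>) x *\<^sub>R f x))"
    by (rule integrable_mult_indicator) (use oO i1 in auto)
  have eq: "(\<lambda>x. indicator \<Omega> x *\<^sub>R (indicator (closure \<Omega>) x *\<^sub>R f x)) = (\<lambda>x. if x \<in> \<Omega> then f x else 0)"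
  proof
    fix x show "indicator \<Omega> x *\<^sub>R (indicator (closure \<Omega>) x *\<^sub>R f x) = (if x \<in> \<Omega> then f x else 0)"
      using closure_subset[of \<Omega>] by (cases "x \<in> \<Omega>") (auto simp: indicator_def)
  qed
  define v where "v = integral\<^sup>L lborel (\<lambda>x. if x \<in> \<Omega> then f x else 0)"
  have "((\<lambda>x. if x \<in> \<Omega> then f x else 0) has_integral v) UNIV"
    unfolding v_def using has_integral_integral_lborel[OF i2] eq by simp
  then have hi: "(f has_integral v) \<Omega>" by (simp add: has_integral_restrict_UNIV)
  then show "f integrable_on \<Omega>" by blast
  have "integral \<Omega> f = v" using hi by (rule integral_unique)
  moreover have "integral\<^sup>N lborel (\<lambda>x. indicator \<Omega> x * f x) = v"
    by (rule nn_integral_has_integral_lebesgue[OF nn hi])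
  ultimately show "(\<integral>\<^sup>+ x. ennreal (indicator \<Omega> x * f x) \<partial>lborel) = ennreal (integral \<Omega> f)" by simp
qed

lemma CS_real:
  fixes f g :: "real^2 \<Rightarrow> real" and \<Omega> :: "(real^2) set"
  assumes bO: "bounded \<Omega>" and oO: "open \<Omega>" and cf: "continuous_on (closure \<Omega>) f" and cg: "continuous_on (closure \<Omega>) g"
    and nf: "\<And>x. x \<in> \<Omega> \<Longrightarrow> f x \<ge> 0" and ng: "\<And>x. x \<in> \<Omega> \<Longrightarrow> g x \<ge> 0"
  shows "(integral \<Omega> (\<lambda>x. f x * g x))\<^sup>2 \<le> integral \<Omega> (\<lambda>x. (f x)\<^sup>2) * integral \<Omega> (\<lambda>x. (g x)\<^sup>2)"
proof -
  have bOm: "\<Omega> \<in> sets borel" using oO by simp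
  have cf': "continuous_on \<Omega> f" using cf closure_subset continuous_on_subset by blast
  have cg': "continuous_on \<Omega> g" using cg closure_subset continuous_on_subset by blast
  define F where "F x = ennreal (indicator \<Omega> x * f x)" for x
  define G where "G x = ennreal (indicator \<Omega> x * g x)" for x
  have Fm: "F \<in> borel_measurable lborel"
    using borel_measurable_continuous_on_indicator[OF bOm cf'] unfolding F_def by simp
  have Gm: "G \<in> borel_measurable lborel"
    using borel_measurable_continuous_on_indicator[OF bOm cg'] unfolding G_def by simp
  have CS: "(\<integral>\<^sup>+x. F x * G x \<partial>lborel)\<^sup>2 \<le> (\<integral>\<^sup>+x. F x ^ 2 \<partial>lborel) * (\<integral>\<^sup>+x. G x ^ 2 \<partial>lborel)"
    by (rule Cauchy_Schwarz_nn_integral[OF Fm Gm])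
  have e1: "(\<integral>\<^sup>+x. F x * G x \<partial>lborel) = ennreal (integral \<Omega> (\<lambda>x. f x * g x))"
  proof -
    have "(\<integral>\<^sup>+x. F x * G x \<partial>lborel) = (\<integral>\<^sup>+x. ennreal (indicator \<Omega> x * (f x * g x)) \<partial>lborel)"
      by (intro nn_integral_cong) (auto simp: F_def G_def indicator_def nf ng ennreal_mult[symmetric])
    also have "\<dots> = ennreal (integral \<Omega> (\<lambda>x. f x * g x))"
      by (rule nn_eq_integral(2)[OF bO oO]) (auto intro!: continuous_intros cf cg mult_nonneg_nonneg nf ng)
    finally show ?thesis .
  qed
  have e2: "(\<integral>\<^sup>+x. F x ^ 2 \<partial>lborel) = ennreal (integral \<Omega> (\<lambda>x. (f x)\<^sup>2))"
  proof -
    have "(\<integral>\<^sup>+x. F x ^ 2 \<partial>lborel) = (\<integral>\<^sup>+x. ennreal (indicator \<Omega> x * (f x)\<^sup>2) \<partial>lborel)"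
      by (intro nn_integral_cong) (auto simp: F_def indicator_def nf ennreal_power)
    also have "\<dots> = ennreal (integral \<Omega> (\<lambda>x. (f x)\<^sup>2))"
      by (rule nn_eq_integral(2)[OF bO oO]) (auto intro!: continuous_intros cf)
    finally show ?thesis .
  qed
  have e3: "(\<integral>\<^sup>+x. G x ^ 2 \<partial>lborel) = ennreal (integral \<Omega> (\<lambda>x. (g x)\<^sup>2))"
  proof -
    have "(\<integral>\<^sup>+x. G x ^ 2 \<partial>lborel) = (\<integral>\<^sup>+x. ennreal (indicator \<Omega> x * (g x)\<^sup>2) \<partial>lborel)"
      by (intro nn_integral_cong) (auto simp: G_def indicator_def ng ennreal_power)
    also have "\<dots> = ennreal (integral \<Omega> (\<lambda>x. (g x)\<^sup>2))"
      by (rule nn_eq_integral(2)[OF bO oO]) (auto intro!: continuous_intros cg)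
    finally show ?thesis .
  qed
  have i1: "(\<lambda>x. f x * g x) integrable_on \<Omega>"
    by (rule nn_eq_integral(1)[OF bO oO]) (auto intro!: continuous_intros cf cg mult_nonneg_nonneg nf ng)
  have i2: "(\<lambda>x. (f x)\<^sup>2) integrable_on \<Omega>"
    by (rule nn_eq_integral(1)[OF bO oO]) (auto intro!: continuous_intros cf)
  have i3: "(\<lambda>x. (g x)\<^sup>2) integrable_on \<Omega>"
    by (rule nn_eq_integral(1)[OF bO oO]) (auto intro!: continuous_intros cg)
  have n1: "integral \<Omega> (\<lambda>x. f x * g x) \<ge> 0" by (rule integral_nonneg[OF i1]) (auto simp: nf ng)
  have n2: "integral \<Omega> (\<lambda>x. (f x)\<^sup>2) \<ge> 0" by (rule integral_nonneg[OF i2]) auto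
  have n3: "integral \<Omega> (\<lambda>x. (g x)\<^sup>2) \<ge> 0" by (rule integral_nonneg[OF i3]) auto
  from CS have "ennreal ((integral \<Omega> (\<lambda>x. f x * g x))\<^sup>2) \<le> ennreal (integral \<Omega> (\<lambda>x. (f x)\<^sup>2) * integral \<Omega> (\<lambda>x. (g x)\<^sup>2))"
    unfolding e1 e2 e3 using n1 n2 n3 by (simp add: ennreal_power ennreal_mult)
  then show ?thesis using n2 n3 by (simp add: ennreal_le_iff)
qed

lemma sq_powr: "(x::real) > 0 \<Longrightarrow> (x powr r)\<^sup>2 = x powr (2*r)"
  by (simp add: power2_eq_square powr_add[symmetric])

lemma sq_powr2: "(x::real) > 0 \<Longrightarrow> (x powr (r / 2))\<^sup>2 = x powr r"
  by (simp add: power2_eq_square powr_add[symmetric])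

lemma w_deriv:
  fixes \<phi> \<psi> :: "real^2 \<Rightarrow> real"
  assumes p0: "\<phi> x > 0" and q0: "\<psi> x > 0"
    and dp: "(\<phi> has_derivative (\<lambda>h. Gp \<bullet> h)) (at x)" and dq: "(\<psi> has_derivative (\<lambda>h. Gq \<bullet> h)) (at x)"
  shows "((\<lambda>x. \<phi> x powr a * sqrt (\<psi> x)) has_derivative
     (\<lambda>h. ((a * \<phi> x powr (a - 1) * sqrt (\<psi> x)) *\<^sub>R Gp + (\<phi> x powr a / (2 * sqrt (\<psi> x))) *\<^sub>R Gq) \<bullet> h)) (at x)"
proof -
  have d1: "((\<lambda>x. \<phi> x powr a) has_derivative (\<lambda>h. (a * \<phi> x powr (a - 1)) * (Gp \<bullet> h))) (at x)"
  proof -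
    have "((\<lambda>z. z powr a) has_derivative (*) (a * \<phi> x powr (a - 1))) (at (\<phi> x))"
      using has_real_derivative_powr[OF p0, of a] by (simp add: has_field_derivative_def)
    from has_derivative_compose[OF dp this] show ?thesis .
  qed
  have d2: "((\<lambda>x. sqrt (\<psi> x)) has_derivative (\<lambda>h. (inverse (sqrt (\<psi> x)) / 2) * (Gq \<bullet> h))) (at x)"
  proof -
    have "(sqrt has_derivative (*) (inverse (sqrt (\<psi> x)) / 2)) (at (\<psi> x))"
      using DERIV_real_sqrt[OF q0] by (simp add: has_field_derivative_def)
    from has_derivative_compose[OF dq this] show ?thesis .
  qed
  from has_derivative_mult[OF d1 d2]
  have "((\<lambda>x. \<phi> x powr a * sqrt (\<psi> x)) has_derivative
     (\<lambda>h. \<phi> x powr a * ((inverse (sqrt (\<psi> x)) / 2) * (Gq \<bullet> h)) + (a * \<phi> x powr (a - 1)) * (Gp \<bullet> h) * sqrt (\<psi> x))) (at x)" .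
  moreover have "(\<lambda>h. \<phi> x powr a * ((inverse (sqrt (\<psi> x)) / 2) * (Gq \<bullet> h)) + (a * \<phi> x powr (a - 1)) * (Gp \<bullet> h) * sqrt (\<psi> x))
      = (\<lambda>h. ((a * \<phi> x powr (a - 1) * sqrt (\<psi> x)) *\<^sub>R Gp + (\<phi> x powr a / (2 * sqrt (\<psi> x))) *\<^sub>R Gq) \<bullet> h)"
    by (rule ext) (simp add: inner_add_left field_simps)
  ultimately show ?thesis by simp
qed

theorem lemma4p1:
  fixes \<Omega> :: "(real^2) set" and p :: real
  assumes "bounded \<Omega>" and "open \<Omega>" and "connected \<Omega>" and "\<Omega> \<noteq> {}"
    and "smooth_boundary \<Omega>" and "p \<ge> 1"
  shows "\<exists>c>0. \<forall>\<phi> \<psi>. C1_closure \<Omega> \<phi> \<and> C1_closure \<Omega> \<psi> \<and>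
            (\<forall>x\<in>closure \<Omega>. \<phi> x > 0 \<and> \<psi> x > 0) \<longrightarrow>
          integral \<Omega> (\<lambda>x. \<phi> x powr (p + 1) * \<psi> x)
            \<le> c * (integral \<Omega> (\<lambda>x. \<psi> x * (norm (grad \<phi> x))\<^sup>2)
                   + integral \<Omega> (\<lambda>x. \<phi> x / \<psi> x * (norm (grad \<psi> x))\<^sup>2)
                   + integral \<Omega> (\<lambda>x. \<phi> x * \<psi> x))
                * integral \<Omega> (\<lambda>x. \<phi> x powr p)
              + c * integral \<Omega> (\<lambda>x. \<psi> x * (norm (grad \<phi> x))\<^sup>2)"
proof -
  note bO = assms(1) and oO = assms(2) and ne = assms(4) and sb = assms(5) and p1 = assms(6)
  obtain K where K0: "K > 0" and Ksob:
    "\<And>w Gw. (\<And>x. x \<in> \<Omega> \<Longrightarrow> (w has_derivative (\<lambda>h. Gw x \<bullet> h)) (at x)) \<Longrightarrow> continuous_on \<Omega> Gw \<Longrightarrow>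
      (\<And>x. x \<in> \<Omega> \<Longrightarrow> w x \<ge> 0) \<Longrightarrow>
      (\<integral>\<^sup>+ x. ennreal (indicator \<Omega> x * (w x)\<^sup>2) \<partial>lborel)
        \<le> ennreal K * (\<integral>\<^sup>+ x. ennreal (indicator \<Omega> x * (norm (Gw x) + w x)) \<partial>lborel)\<^sup>2"
    using sobolev[OF bO oO sb ne] by blast
  define a where "a = (p + 1) / 2"
  define mO where "mO = integral \<Omega> (\<lambda>x. 1::real)"
  have int1: "(\<lambda>x. 1::real) integrable_on \<Omega>"
    by (rule nn_eq_integral(1)[OF bO oO]) auto
  have mO0: "mO \<ge> 0" unfolding mO_def by (rule integral_nonneg[OF int1]) auto
  define c where "c = 3 * K * (a\<^sup>2 + 1) * (1 + mO)"
  have c0: "c > 0" unfolding c_def using K0 mO0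
    by (intro mult_pos_pos) (auto intro: add_pos_nonneg add_nonneg_pos)
  show ?thesis
  proof (rule exI[of _ c], intro conjI allI impI)
    show "c > 0" by (rule c0)
    fix \<phi> \<psi> :: "real^2 \<Rightarrow> real"
    assume H: "C1_closure \<Omega> \<phi> \<and> C1_closure \<Omega> \<psi> \<and> (\<forall>x\<in>closure \<Omega>. \<phi> x > 0 \<and> \<psi> x > 0)"
    then obtain gp gq where
      dp: "\<And>x. x \<in> \<Omega> \<Longrightarrow> \<phi> differentiable (at x)" and cp: "continuous_on (closure \<Omega>) \<phi>"
      and cgp: "continuous_on (closure \<Omega>) gp" and gpe: "\<And>x. x \<in> \<Omega> \<Longrightarrow> gp x = grad \<phi> x"
      and dq: "\<And>x. x \<in> \<Omega> \<Longrightarrow> \<psi> differentiable (at x)" and cq: "continuous_on (closure \<Omega>) \<psi>"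
      and cgq: "continuous_on (closure \<Omega>) gq" and gqe: "\<And>x. x \<in> \<Omega> \<Longrightarrow> gq x = grad \<psi> x"
      and pos: "\<And>x. x \<in> closure \<Omega> \<Longrightarrow> \<phi> x > 0 \<and> \<psi> x > 0"
      unfolding C1_closure_def by metis
    have pp: "\<phi> x > 0" if "x \<in> closure \<Omega>" for x using pos[OF that] by simp
    have qp: "\<psi> x > 0" if "x \<in> closure \<Omega>" for x using pos[OF that] by simp
    have inC: "x \<in> closure \<Omega>" if "x \<in> \<Omega>" for x using that closure_subset by blast
    have p0: "0 \<le> \<phi> x" if "x \<in> \<Omega>" for x using pp[OF inC[OF that]] by simp
    have q0: "0 \<le> \<psi> x" if "x \<in> \<Omega>" for x using qp[OF inC[OF that]] by simp
    have Dp: "(\<phi> has_derivative (\<lambda>h. gp x \<bullet> h)) (at x)" if "x \<in> \<Omega>" for x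
      using grad_has_derivative[OF dp[OF that]] gpe[OF that] by simp
    have Dq: "(\<psi> has_derivative (\<lambda>h. gq x \<bullet> h)) (at x)" if "x \<in> \<Omega>" for x
      using grad_has_derivative[OF dq[OF that]] gqe[OF that] by simp
    define w where "w x = \<phi> x powr a * sqrt (\<psi> x)" for x
    define Gw where "Gw x = (a * \<phi> x powr (a - 1) * sqrt (\<psi> x)) *\<^sub>R gp x + (\<phi> x powr a / (2 * sqrt (\<psi> x))) *\<^sub>R gq x" for x
    have pne: "\<forall>x\<in>closure \<Omega>. \<phi> x \<noteq> 0" using pp by fastforce
    have qne: "\<forall>x\<in>closure \<Omega>. 2 * sqrt (\<psi> x) \<noteq> 0" using qp by fastforce
    have cw: "continuous_on (closure \<Omega>) w" unfolding w_def
      by (intro continuous_intros cp cq pne)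
    have cGw: "continuous_on (closure \<Omega>) Gw" unfolding Gw_def
      by (intro continuous_intros cp cq cgp cgq pne qne)
    have Dw: "(w has_derivative (\<lambda>h. Gw x \<bullet> h)) (at x)" if "x \<in> \<Omega>" for x
      unfolding w_def[abs_def] Gw_def using w_deriv[OF pp[OF inC[OF that]] qp[OF inC[OF that]] Dp[OF that] Dq[OF that]] .
    have w0: "w x \<ge> 0" if "x \<in> \<Omega>" for x unfolding w_def using qp[OF inC[OF that]] by simp
    have cGwO: "continuous_on \<Omega> Gw" using cGw closure_subset continuous_on_subset by blast
    from Ksob[OF Dw cGwO w0]
    have S1: "(\<integral>\<^sup>+ x. ennreal (indicator \<Omega> x * (w x)\<^sup>2) \<partial>lborel)
        \<le> ennreal K * (\<integral>\<^sup>+ x. ennreal (indicator \<Omega> x * (norm (Gw x) + w x)) \<partial>lborel)\<^sup>2" .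
    define Lw where "Lw = integral \<Omega> (\<lambda>x. (w x)\<^sup>2)"
    define Iw where "Iw = integral \<Omega> (\<lambda>x. norm (Gw x) + w x)"
    have eL: "(\<integral>\<^sup>+ x. ennreal (indicator \<Omega> x * (w x)\<^sup>2) \<partial>lborel) = ennreal Lw"
      unfolding Lw_def by (rule nn_eq_integral(2)[OF bO oO]) (auto intro!: continuous_intros cw)
    have eI: "(\<integral>\<^sup>+ x. ennreal (indicator \<Omega> x * (norm (Gw x) + w x)) \<partial>lborel) = ennreal Iw"
      unfolding Iw_def by (rule nn_eq_integral(2)[OF bO oO]) (auto intro!: continuous_intros cw cGw add_nonneg_nonneg w0)
    have iIw: "(\<lambda>x. norm (Gw x) + w x) integrable_on \<Omega>"
      by (rule nn_eq_integral(1)[OF bO oO]) (auto intro!: continuous_intros cw cGw add_nonneg_nonneg w0)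
    have Iw0: "Iw \<ge> 0" unfolding Iw_def by (rule integral_nonneg[OF iIw]) (simp add: w0 add_nonneg_nonneg)
    have LK: "Lw \<le> K * Iw\<^sup>2"
    proof -
      have "ennreal Lw \<le> ennreal (K * Iw\<^sup>2)"
        using S1 unfolding eL eI using K0 Iw0 by (simp add: ennreal_power ennreal_mult)
      then show ?thesis using K0 by (simp add: ennreal_le_iff)
    qed
    define A where "A = integral \<Omega> (\<lambda>x. \<psi> x * (norm (gp x))\<^sup>2)"
    define B where "B = integral \<Omega> (\<lambda>x. \<phi> x / \<psi> x * (norm (gq x))\<^sup>2)"
    define C where "C = integral \<Omega> (\<lambda>x. \<phi> x * \<psi> x)"
    define P where "P = integral \<Omega> (\<lambda>x. \<phi> x powr p)"
    define Q where "Q = integral \<Omega> (\<lambda>x. \<phi> x powr (p - 1))"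
    define f1 where "f1 x = \<phi> x powr ((p - 1) / 2) * (sqrt (\<psi> x) * norm (gp x))" for x
    define f2 where "f2 x = \<phi> x powr (p / 2) * (sqrt (\<phi> x) * norm (gq x) / sqrt (\<psi> x))" for x
    define f0 where "f0 x = \<phi> x powr (p / 2) * (sqrt (\<phi> x) * sqrt (\<psi> x))" for x
    have qne0: "\<forall>x\<in>closure \<Omega>. \<psi> x \<noteq> 0" using qp by fastforce
    have sqpne: "\<forall>x\<in>closure \<Omega>. sqrt (\<psi> x) \<noteq> 0" using qp by fastforce
    have cf1: "continuous_on (closure \<Omega>) f1" unfolding f1_def by (intro continuous_intros cp cq cgp pne)
    have cf2: "continuous_on (closure \<Omega>) f2" unfolding f2_def by (intro continuous_intros cp cq cgq pne sqpne)
    have cf0: "continuous_on (closure \<Omega>) f0" unfolding f0_def by (intro continuous_intros cp cq pne)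
    have f1p: "f1 x \<ge> 0" if "x \<in> \<Omega>" for x unfolding f1_def using qp[OF inC[OF that]] by simp
    have f2p: "f2 x \<ge> 0" if "x \<in> \<Omega>" for x unfolding f2_def using qp[OF inC[OF that]] pp[OF inC[OF that]] by simp
    have f0p: "f0 x \<ge> 0" if "x \<in> \<Omega>" for x unfolding f0_def using qp[OF inC[OF that]] pp[OF inC[OF that]] by simp
    have if1: "f1 integrable_on \<Omega>" by (rule nn_eq_integral(1)[OF bO oO cf1 f1p])
    have if2: "f2 integrable_on \<Omega>" by (rule nn_eq_integral(1)[OF bO oO cf2 f2p])
    have if0: "f0 integrable_on \<Omega>" by (rule nn_eq_integral(1)[OF bO oO cf0 f0p])
    define J1 where "J1 = integral \<Omega> f1"
    define J2 where "J2 = integral \<Omega> f2"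
    define J0 where "J0 = integral \<Omega> f0"
    have J1p: "J1 \<ge> 0" unfolding J1_def by (rule integral_nonneg[OF if1]) (simp add: f1p)
    have J2p: "J2 \<ge> 0" unfolding J2_def by (rule integral_nonneg[OF if2]) (simp add: f2p)
    have J0p: "J0 \<ge> 0" unfolding J0_def by (rule integral_nonneg[OF if0]) (simp add: f0p)
    have a0: "a \<ge> 0" unfolding a_def using p1 by simp
    have pw: "norm (Gw x) + w x \<le> a * f1 x + 1/2 * f2 x + f0 x" if "x \<in> \<Omega>" for x
    proof -
      have px: "\<phi> x > 0" and qx: "\<psi> x > 0" using pp qp inC[OF that] by auto
      have e1: "\<phi> x powr (a - 1) = \<phi> x powr ((p - 1) / 2)" unfolding a_def by (simp add: field_simps)
      have e2: "\<phi> x powr a = \<phi> x powr (p / 2) * sqrt (\<phi> x)"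
      proof -
        have "\<phi> x powr a = \<phi> x powr (p / 2 + 1/2)" unfolding a_def by (simp add: field_simps)
        also have "\<dots> = \<phi> x powr (p / 2) * \<phi> x powr (1/2)" by (rule powr_add)
        finally show ?thesis using px by (simp add: powr_half_sqrt)
      qed
      have "norm (Gw x) \<le> norm ((a * \<phi> x powr (a - 1) * sqrt (\<psi> x)) *\<^sub>R gp x) + norm ((\<phi> x powr a / (2 * sqrt (\<psi> x))) *\<^sub>R gq x)"
        unfolding Gw_def by (rule norm_triangle_ineq)
      also have "\<dots> = a * f1 x + 1/2 * f2 x"
        using a0 px qx unfolding f1_def f2_def e1 e2 by (simp add: abs_mult field_simps)
      finally have "norm (Gw x) \<le> a * f1 x + 1/2 * f2 x" .
      moreover have "w x = f0 x" unfolding w_def f0_def e2 by (simp add: mult.assoc)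
      ultimately show ?thesis by simp
    qed
    have IJ: "Iw \<le> a * J1 + 1/2 * J2 + J0"
    proof -
      have ii: "(\<lambda>x. a * f1 x + 1/2 * f2 x + f0 x) integrable_on \<Omega>"
        by (intro integrable_add integrable_on_mult_right if1 if2 if0)
      have "Iw \<le> integral \<Omega> (\<lambda>x. a * f1 x + 1/2 * f2 x + f0 x)"
        unfolding Iw_def by (rule integral_le[OF iIw ii pw])
      also have "\<dots> = a * J1 + 1/2 * J2 + J0"
        unfolding J1_def J2_def J0_def
        by (simp add: integral_add integral_mult_right if1 if2 if0 integrable_on_mult_right integrable_add)
      finally show ?thesis .
    qed
    have CS1: "J1\<^sup>2 \<le> Q * A"
    proof -
      have "J1\<^sup>2 \<le> integral \<Omega> (\<lambda>x. (\<phi> x powr ((p - 1) / 2))\<^sup>2) * integral \<Omega> (\<lambda>x. (sqrt (\<psi> x) * norm (gp x))\<^sup>2)"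
        unfolding J1_def f1_def
        by (rule CS_real[OF bO oO]) (auto intro!: continuous_intros cp cq cgp pne simp: p0 q0)
      also have "integral \<Omega> (\<lambda>x. (\<phi> x powr ((p - 1) / 2))\<^sup>2) = Q"
        unfolding Q_def by (rule integral_cong) (use pp inC in \<open>simp add: sq_powr2\<close>)
      also have "integral \<Omega> (\<lambda>x. (sqrt (\<psi> x) * norm (gp x))\<^sup>2) = A"
        unfolding A_def by (rule integral_cong) (use qp inC in \<open>simp add: power_mult_distrib less_imp_le\<close>)
      finally show ?thesis .
    qed
    have CS2: "J2\<^sup>2 \<le> P * B"
    proof -
      have "J2\<^sup>2 \<le> integral \<Omega> (\<lambda>x. (\<phi> x powr (p / 2))\<^sup>2) * integral \<Omega> (\<lambda>x. (sqrt (\<phi> x) * norm (gq x) / sqrt (\<psi> x))\<^sup>2)"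
        unfolding J2_def f2_def
        by (rule CS_real[OF bO oO]) (auto intro!: continuous_intros cp cq cgq pne sqpne simp: p0 q0)
      also have "integral \<Omega> (\<lambda>x. (\<phi> x powr (p / 2))\<^sup>2) = P"
        unfolding P_def by (rule integral_cong) (use pp inC in \<open>simp add: sq_powr2\<close>)
      also have "integral \<Omega> (\<lambda>x. (sqrt (\<phi> x) * norm (gq x) / sqrt (\<psi> x))\<^sup>2) = B"
        unfolding B_def by (rule integral_cong) (use pp qp inC in \<open>simp add: power_mult_distrib power_divide less_imp_le\<close>)
      finally show ?thesis .
    qed
    have CS0: "J0\<^sup>2 \<le> P * C"
    proof -
      have "J0\<^sup>2 \<le> integral \<Omega> (\<lambda>x. (\<phi> x powr (p / 2))\<^sup>2) * integral \<Omega> (\<lambda>x. (sqrt (\<phi> x) * sqrt (\<psi> x))\<^sup>2)"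
        unfolding J0_def f0_def
        by (rule CS_real[OF bO oO]) (auto intro!: continuous_intros cp cq pne simp: p0 q0)
      also have "integral \<Omega> (\<lambda>x. (\<phi> x powr (p / 2))\<^sup>2) = P"
        unfolding P_def by (rule integral_cong) (use pp inC in \<open>simp add: sq_powr2\<close>)
      also have "integral \<Omega> (\<lambda>x. (sqrt (\<phi> x) * sqrt (\<psi> x))\<^sup>2) = C"
        unfolding C_def by (rule integral_cong) (use pp qp inC in \<open>simp add: power_mult_distrib less_imp_le\<close>)
      finally show ?thesis .
    qed
    have iA: "(\<lambda>x. \<psi> x * (norm (gp x))\<^sup>2) integrable_on \<Omega>"
      by (rule nn_eq_integral(1)[OF bO oO]) (auto intro!: continuous_intros cq cgp simp: q0)
    have iB: "(\<lambda>x. \<phi> x / \<psi> x * (norm (gq x))\<^sup>2) integrable_on \<Omega>"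
      by (rule nn_eq_integral(1)[OF bO oO]) (auto intro!: continuous_intros cp cq cgq qne0 simp: p0 q0)
    have iC: "(\<lambda>x. \<phi> x * \<psi> x) integrable_on \<Omega>"
      by (rule nn_eq_integral(1)[OF bO oO]) (auto intro!: continuous_intros cp cq simp: p0 q0)
    have iP: "(\<lambda>x. \<phi> x powr p) integrable_on \<Omega>"
      by (rule nn_eq_integral(1)[OF bO oO]) (auto intro!: continuous_intros cp pne)
    have iQ: "(\<lambda>x. \<phi> x powr (p - 1)) integrable_on \<Omega>"
      by (rule nn_eq_integral(1)[OF bO oO]) (auto intro!: continuous_intros cp pne)
    have A0: "A \<ge> 0" unfolding A_def by (rule integral_nonneg[OF iA]) (simp add: q0)
    have B0: "B \<ge> 0" unfolding B_def by (rule integral_nonneg[OF iB]) (simp add: p0 q0)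
    have C0: "C \<ge> 0" unfolding C_def by (rule integral_nonneg[OF iC]) (simp add: p0 q0)
    have P0: "P \<ge> 0" unfolding P_def by (rule integral_nonneg[OF iP]) simp
    have QP: "Q \<le> mO + P"
    proof -
      have "Q \<le> integral \<Omega> (\<lambda>x. 1 + \<phi> x powr p)"
        unfolding Q_def
      proof (rule integral_le[OF iQ integrable_add[OF int1 iP]])
        fix x assume "x \<in> \<Omega>"
        then have px: "\<phi> x > 0" using pp inC by auto
        show "\<phi> x powr (p - 1) \<le> 1 + \<phi> x powr p"
        proof (cases "\<phi> x \<le> 1")
          case True
          then have "\<phi> x powr (p - 1) \<le> 1" using px p1 by (intro powr_le1) auto
          then show ?thesis by (smt (verit) powr_ge_zero)
        next
          case False
          then have "\<phi> x powr (p - 1) \<le> \<phi> x powr p" by (intro powr_mono) auto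
          then show ?thesis by simp
        qed
      qed
      also have "\<dots> = mO + P" unfolding mO_def P_def by (rule integral_add[OF int1 iP])
      finally show ?thesis .
    qed
    have sq3: "(u + v + t)\<^sup>2 \<le> 3 * (u\<^sup>2 + v\<^sup>2 + t\<^sup>2)" for u v t :: real
    proof -
      have "3 * (u\<^sup>2 + v\<^sup>2 + t\<^sup>2) - (u + v + t)\<^sup>2 = (u - v)\<^sup>2 + (v - t)\<^sup>2 + (u - t)\<^sup>2"
        by (simp add: power2_eq_square algebra_simps)
      moreover have "(u - v)\<^sup>2 + (v - t)\<^sup>2 + (u - t)\<^sup>2 \<ge> 0" by simp
      ultimately show ?thesis by linarith
    qed
    have "Lw \<le> K * Iw\<^sup>2" by (rule LK)
    also have "\<dots> \<le> K * (a * J1 + 1/2 * J2 + J0)\<^sup>2"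
      using IJ Iw0 K0 by (intro mult_left_mono power_mono) auto
    also have "\<dots> \<le> K * (3 * ((a * J1)\<^sup>2 + (1/2 * J2)\<^sup>2 + J0\<^sup>2))"
      using K0 by (intro mult_left_mono sq3) auto
    also have "\<dots> = 3 * K * (a\<^sup>2 * J1\<^sup>2 + 1/4 * J2\<^sup>2 + J0\<^sup>2)"
      by (simp add: power_mult_distrib power2_eq_square algebra_simps)
    also have "\<dots> \<le> 3 * K * (a\<^sup>2 * (Q * A) + 1/4 * (P * B) + P * C)"
      using K0 CS1 CS2 CS0 by (intro mult_left_mono add_mono) (auto intro: mult_left_mono)
    also have "\<dots> \<le> 3 * K * (a\<^sup>2 * ((mO + P) * A) + (P * B) + P * C)"
    proof -
      have "a\<^sup>2 * (Q * A) \<le> a\<^sup>2 * ((mO + P) * A)" using QP A0 by (intro mult_left_mono mult_right_mono) auto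
      moreover have "1/4 * (P * B) \<le> P * B" using P0 B0 by simp
      ultimately have inner: "a\<^sup>2 * (Q * A) + 1/4 * (P * B) + P * C \<le> a\<^sup>2 * ((mO + P) * A) + P * B + P * C"
        by linarith
      show ?thesis by (rule mult_left_mono[OF inner]) (use K0 in simp)
    qed
    also have "\<dots> \<le> c * (A + B + C) * P + c * A"
    proof -
      have PA: "P * A \<ge> 0" "P * B \<ge> 0" "P * C \<ge> 0" "mO * A \<ge> 0" using P0 A0 B0 C0 mO0 by simp_all
      have "a\<^sup>2 * ((mO + P) * A) + (P * B) + P * C \<le> (a\<^sup>2 + 1) * (1 + mO) * ((A + B + C) * P + A)"
      proof -
        have "(a\<^sup>2 + 1) * (1 + mO) * ((A + B + C) * P + A) - (a\<^sup>2 * ((mO + P) * A) + (P * B) + P * C)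
          = a\<^sup>2 * (mO * (P * B) + mO * (P * C) + P * B + P * C + mO * (P * A) + A)
            + (P * A + P * B + P * C) * mO + P * A + A + mO * A"
          by (simp add: algebra_simps)
        moreover have "a\<^sup>2 * (mO * (P * B) + mO * (P * C) + P * B + P * C + mO * (P * A) + A) \<ge> 0"
          using PA mO0 A0 P0 B0 C0 by (intro mult_nonneg_nonneg add_nonneg_nonneg) auto
        moreover have "(P * A + P * B + P * C) * mO \<ge> 0" using PA mO0 by simp
        ultimately show ?thesis using PA A0 by linarith
      qed
      then have "3 * K * (a\<^sup>2 * ((mO + P) * A) + (P * B) + P * C) \<le> 3 * K * ((a\<^sup>2 + 1) * (1 + mO) * ((A + B + C) * P + A))"
        using K0 by (intro mult_left_mono) auto
      also have "\<dots> = c * (A + B + C) * P + c * A" unfolding c_def by (simp add: algebra_simps)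
      finally show ?thesis .
    qed
    finally have main: "Lw \<le> c * (A + B + C) * P + c * A" .
    have "Lw = integral \<Omega> (\<lambda>x. \<phi> x powr (p + 1) * \<psi> x)"
      unfolding Lw_def
    proof (rule integral_cong)
      fix x assume "x \<in> \<Omega>"
      then have px: "\<phi> x > 0" and qx: "\<psi> x > 0" using pp qp inC by auto
      show "(w x)\<^sup>2 = \<phi> x powr (p + 1) * \<psi> x"
        unfolding w_def a_def using px qx by (simp add: power_mult_distrib sq_powr2)
    qed
    moreover have "A = integral \<Omega> (\<lambda>x. \<psi> x * (norm (grad \<phi> x))\<^sup>2)"
      unfolding A_def by (rule integral_cong) (simp add: gpe)
    moreover have "B = integral \<Omega> (\<lambda>x. \<phi> x / \<psi> x * (norm (grad \<psi> x))\<^sup>2)"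
      unfolding B_def by (rule integral_cong) (simp add: gqe)
    ultimately show "integral \<Omega> (\<lambda>x. \<phi> x powr (p + 1) * \<psi> x)
            \<le> c * (integral \<Omega> (\<lambda>x. \<psi> x * (norm (grad \<phi> x))\<^sup>2)
                   + integral \<Omega> (\<lambda>x. \<phi> x / \<psi> x * (norm (grad \<psi> x))\<^sup>2)
                   + integral \<Omega> (\<lambda>x. \<phi> x * \<psi> x))
                * integral \<Omega> (\<lambda>x. \<phi> x powr p)
              + c * integral \<Omega> (\<lambda>x. \<psi> x * (norm (grad \<phi> x))\<^sup>2)"
      using main unfolding C_def P_def by simp
  qed
qed

end
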